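(* Let $$\begin{matrix} A_{10} &\subseteq & A_{11}\\ \cup & & \cup\\ A_{00} &\subseteq & A_{01}\end{matrix}$$ be a commuting square of finite pre-von Neumann algebras, meaning: each inclusion in the quadruple is a compatible pair (i.e. $t_{A_{11}}|_{A_{ij}}=t_{A_{ij}}$), for each $i,j\in\{0,1\}$ there is a $*$-preserving and trace-preserving $A_{ij}$-$A_{ij}$ bimodule retraction $E_{A_{ij}}:A_{11}\to A_{ij}$ for the inclusion $A_{ij}\subseteq A_{11}$, and $E_{A_{10}}E_{A_{01}}(a)=E_{A_{00}}(a)=E_{A_{01}}E_{A_{10}}(a)$ for all $a\in A_{11}$. For each $i,j$ let $M_{A_{ij}}=\lambda_{A_{ij}}(A_{ij})''$, let $\iota_{A_{ij}}:M_{A_{ij}}\to M_{A_{11}}$ be the normal inclusion and $E_{A_{ij}}:M_{A_{11}}\to M_{A_{ij}}$ the trace-preserving conditional expectation extending $E_{A_{ij}}$. Then $$\begin{matrix} M_{A_{10}} &\subseteq & M_{A_{11}}\\ \cup & & \cup\\ M_{A_{00}} &\subseteq & M_{A_{01}}\end{matrix}$$ is a commuting square of von Neumann algebras, i.e. for all $x\in M_{A_{11}}$, $$\iota_{A_{10}}E_{A_{10}}\iota_{A_{01}}E_{A_{01}}(x)=\iota_{A_{00}}E_{A_{00}}(x)=\iota_{A_{01}}E_{A_{01}}\iota_{A_{10}}E_{A_{10}}(x).$$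
   Context: A finite pre-von Neumann algebra is a complex unital $*$-algebra $A$ with a normalized trace $t$ such that $\langle a,b\rangle=t(b^*a)$ is an inner product and each left multiplication $\lambda_A(a)$ is bounded for the induced norm; $\mathcal{H}_A$ is its Hilbert space completion with canonical embedding $\Gamma:A\to\mathcal{H}_A$, $\Omega=\Gamma(1)$, $\lambda_A:A\to\mathcal{B}(\mathcal{H}_A)$ the left regular representation. For a compatible pair $A\subseteq B$ (unital inclusion with $t_B|_A=t_A$), $\mathcal{H}_A\subseteq\mathcal{H}_B$ with common vacuum $\Omega$, $J_B$ is the bounded extension of $\Gamma(b)\mapsto\Gamma(b^* )$, and the normal inclusion $\iota_A:M_A\to M_B$ is $\iota_A(x)(\Gamma(b))=J_B(\lambda_B(b^* )x^*\Omega)$. Given a $*$- and trace-preserving $A$-$A$ bimodule retraction $E_A:B\to A$, it extends to the unique trace-preserving conditional expectation $M_B\to M_A$ (with respect to the trace $x\mapsto\langle x\Omega,\Omega\rangle$), satisfying $E_A(\lambda_B(b))=\lambda_A(E_A(b))$. *)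

theory Defs
  imports Complex_Main
begin

text \<open>Data of a complex unital *-algebra with a trace, carried by a type 'a of class ring_1
  (ring structure from the type class, complex scalars, star and trace explicit).\<close>
record 'a pvn =
  asc :: "complex \<Rightarrow> 'a \<Rightarrow> 'a"
  ast :: "'a \<Rightarrow> 'a"
  atr :: "'a \<Rightarrow> complex"

record 'h hsp =
  hsc :: "complex \<Rightarrow> 'h \<Rightarrow> 'h"
  hip :: "'h \<Rightarrow> 'h \<Rightarrow> complex"

definition star_alg :: "('a::ring_1) pvn \<Rightarrow> bool" where
  "star_alg P \<longleftrightarrow>
     (\<forall>c a b. asc P c (a + b) = asc P c a + asc P c b) \<and>
     (\<forall>c d a. asc P (c + d) a = asc P c a + asc P d a) \<and>
     (\<forall>c d a. asc P (c * d) a = asc P c (asc P d a)) \<and>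
     (\<forall>a. asc P 1 a = a) \<and>
     (\<forall>c a b. asc P c (a * b) = asc P c a * b) \<and>
     (\<forall>c a b. asc P c (a * b) = a * asc P c b) \<and>
     (\<forall>a b. ast P (a + b) = ast P a + ast P b) \<and>
     (\<forall>c a. ast P (asc P c a) = asc P (cnj c) (ast P a)) \<and>
     (\<forall>a b. ast P (a * b) = ast P b * ast P a) \<and>
     (\<forall>a. ast P (ast P a) = a)"

text \<open>Finite pre-von Neumann algebra (the whole type is the algebra).\<close>
definition fin_pvn :: "('a::ring_1) pvn \<Rightarrow> bool" where
  "fin_pvn P \<longleftrightarrow> star_alg P \<and>
     (\<forall>a b. atr P (a + b) = atr P a + atr P b) \<and>
     (\<forall>c a. atr P (asc P c a) = c * atr P a) \<and>
     atr P 1 = 1 \<and>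
     (\<forall>a b. atr P (a * b) = atr P (b * a)) \<and>
     (\<forall>a b. atr P (ast P a * b) = cnj (atr P (ast P b * a))) \<and>
     (\<forall>a. Im (atr P (ast P a * a)) = 0 \<and> Re (atr P (ast P a * a)) \<ge> 0) \<and>
     (\<forall>a. atr P (ast P a * a) = 0 \<longrightarrow> a = 0) \<and>
     (\<forall>a. \<exists>C. \<forall>b. Re (atr P (ast P (a * b) * (a * b))) \<le> C * Re (atr P (ast P b * b)))"

text \<open>Unital *-subalgebra (with the restricted trace it is again a finite pre-vN algebra,
  and the inclusion is a compatible pair).\<close>
definition subalg :: "('a::ring_1) pvn \<Rightarrow> 'a set \<Rightarrow> bool" where
  "subalg P A \<longleftrightarrow> 1 \<in> A \<and>
     (\<forall>a\<in>A. \<forall>b\<in>A. a + b \<in> A \<and> a * b \<in> A) \<and>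
     (\<forall>c. \<forall>a\<in>A. asc P c a \<in> A) \<and>
     (\<forall>a\<in>A. ast P a \<in> A)"

definition retraction :: "('a::ring_1) pvn \<Rightarrow> 'a set \<Rightarrow> ('a \<Rightarrow> 'a) \<Rightarrow> bool" where
  "retraction P A E \<longleftrightarrow>
     (\<forall>a. E a \<in> A) \<and> (\<forall>a\<in>A. E a = a) \<and>
     (\<forall>a b. E (a + b) = E a + E b) \<and>
     (\<forall>x\<in>A. \<forall>y\<in>A. \<forall>a. E (x * a * y) = x * E a * y) \<and>
     (\<forall>a. E (ast P a) = ast P (E a)) \<and>
     (\<forall>a. atr P (E a) = atr P a)"

definition hnorm :: "('h::ab_group_add) hsp \<Rightarrow> 'h \<Rightarrow> real" where
  "hnorm H x = sqrt (Re (hip H x x))"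

definition hconv :: "('h::ab_group_add) hsp \<Rightarrow> (nat \<Rightarrow> 'h) \<Rightarrow> 'h \<Rightarrow> bool" where
  "hconv H X l \<longleftrightarrow> (\<forall>e>0. \<exists>N. \<forall>n\<ge>N. hnorm H (X n - l) < e)"

definition hcauchy :: "('h::ab_group_add) hsp \<Rightarrow> (nat \<Rightarrow> 'h) \<Rightarrow> bool" where
  "hcauchy H X \<longleftrightarrow> (\<forall>e>0. \<exists>N. \<forall>m\<ge>N. \<forall>n\<ge>N. hnorm H (X m - X n) < e)"

definition hilb :: "('h::ab_group_add) hsp \<Rightarrow> bool" where
  "hilb H \<longleftrightarrow>
     (\<forall>c x y. hsc H c (x + y) = hsc H c x + hsc H c y) \<and>
     (\<forall>c d x. hsc H (c + d) x = hsc H c x + hsc H d x) \<and>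
     (\<forall>c d x. hsc H (c * d) x = hsc H c (hsc H d x)) \<and>
     (\<forall>x. hsc H 1 x = x) \<and>
     (\<forall>x y z. hip H (x + y) z = hip H x z + hip H y z) \<and>
     (\<forall>c x y. hip H (hsc H c x) y = c * hip H x y) \<and>
     (\<forall>x y. hip H y x = cnj (hip H x y)) \<and>
     (\<forall>x. Im (hip H x x) = 0 \<and> Re (hip H x x) \<ge> 0) \<and>
     (\<forall>x. hip H x x = 0 \<longrightarrow> x = 0) \<and>
     (\<forall>X. hcauchy H X \<longrightarrow> (\<exists>l. hconv H X l))"

definition hcl :: "('h::ab_group_add) hsp \<Rightarrow> 'h set \<Rightarrow> 'h set" where
  "hcl H S = {x. \<exists>X. (\<forall>n. X n \<in> S) \<and> hconv H X x}"

text \<open>Isometric embedding \<Gamma> of the algebra into the Hilbert space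
  (the completion is the closure of its range).\<close>
definition emb :: "('a::ring_1) pvn \<Rightarrow> ('h::ab_group_add) hsp \<Rightarrow> ('a \<Rightarrow> 'h) \<Rightarrow> bool" where
  "emb P H \<Gamma> \<longleftrightarrow>
     (\<forall>a b. \<Gamma> (a + b) = \<Gamma> a + \<Gamma> b) \<and>
     (\<forall>c a. \<Gamma> (asc P c a) = hsc H c (\<Gamma> a)) \<and>
     (\<forall>a b. hip H (\<Gamma> a) (\<Gamma> b) = atr P (ast P b * a))"

text \<open>Bounded linear operators on a closed subspace K (normalised to be 0 outside K).\<close>
definition bop :: "('h::ab_group_add) hsp \<Rightarrow> 'h set \<Rightarrow> ('h \<Rightarrow> 'h) \<Rightarrow> bool" where
  "bop H K T \<longleftrightarrow>
     (\<forall>x\<in>K. T x \<in> K) \<and> (\<forall>x. x \<notin> K \<longrightarrow> T x = 0) \<and>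
     (\<forall>x\<in>K. \<forall>y\<in>K. T (x + y) = T x + T y) \<and>
     (\<forall>c. \<forall>x\<in>K. T (hsc H c x) = hsc H c (T x)) \<and>
     (\<exists>C. \<forall>x\<in>K. hnorm H (T x) \<le> C * hnorm H x)"

definition HA :: "('h::ab_group_add) hsp \<Rightarrow> ('a \<Rightarrow> 'h) \<Rightarrow> 'a set \<Rightarrow> 'h set" where
  "HA H \<Gamma> A = hcl H (\<Gamma> ` A)"

definition lam :: "('h::ab_group_add) hsp \<Rightarrow> ('a::ring_1 \<Rightarrow> 'h) \<Rightarrow> 'a set \<Rightarrow> 'a \<Rightarrow> ('h \<Rightarrow> 'h)" where
  "lam H \<Gamma> A a = (THE T. bop H (HA H \<Gamma> A) T \<and> (\<forall>b\<in>A. T (\<Gamma> b) = \<Gamma> (a * b)))"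

definition adj :: "('h::ab_group_add) hsp \<Rightarrow> 'h set \<Rightarrow> ('h \<Rightarrow> 'h) \<Rightarrow> ('h \<Rightarrow> 'h)" where
  "adj H K T = (THE S. bop H K S \<and> (\<forall>x\<in>K. \<forall>y\<in>K. hip H (T x) y = hip H x (S y)))"

definition comm :: "('h::ab_group_add) hsp \<Rightarrow> 'h set \<Rightarrow> ('h \<Rightarrow> 'h) set \<Rightarrow> ('h \<Rightarrow> 'h) set" where
  "comm H K S = {T. bop H K T \<and> (\<forall>s\<in>S. \<forall>x\<in>K. T (s x) = s (T x))}"

definition vN :: "('h::ab_group_add) hsp \<Rightarrow> ('a::ring_1 \<Rightarrow> 'h) \<Rightarrow> 'a set \<Rightarrow> ('h \<Rightarrow> 'h) set" where
  "vN H \<Gamma> A = comm H (HA H \<Gamma> A) (comm H (HA H \<Gamma> A) (lam H \<Gamma> A ` A))"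

definition Jop :: "('a::ring_1) pvn \<Rightarrow> ('h::ab_group_add) hsp \<Rightarrow> ('a \<Rightarrow> 'h) \<Rightarrow> 'a set \<Rightarrow> ('h \<Rightarrow> 'h)" where
  "Jop P H \<Gamma> B = (THE J.
     (\<forall>x. x \<notin> HA H \<Gamma> B \<longrightarrow> J x = 0) \<and>
     (\<forall>x\<in>HA H \<Gamma> B. \<forall>y\<in>HA H \<Gamma> B. J (x + y) = J x + J y) \<and>
     (\<forall>c. \<forall>x\<in>HA H \<Gamma> B. J (hsc H c x) = hsc H (cnj c) (J x)) \<and>
     (\<exists>C. \<forall>x\<in>HA H \<Gamma> B. hnorm H (J x) \<le> C * hnorm H x) \<and>
     (\<forall>b\<in>B. J (\<Gamma> b) = \<Gamma> (ast P b)))"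

definition iota :: "('a::ring_1) pvn \<Rightarrow> ('h::ab_group_add) hsp \<Rightarrow> ('a \<Rightarrow> 'h) \<Rightarrow> 'a set \<Rightarrow> 'a set
     \<Rightarrow> ('h \<Rightarrow> 'h) \<Rightarrow> ('h \<Rightarrow> 'h)" where
  "iota P H \<Gamma> A B x = (THE T. bop H (HA H \<Gamma> B) T \<and>
     (\<forall>b\<in>B. T (\<Gamma> b) = Jop P H \<Gamma> B (lam H \<Gamma> B (ast P b) (adj H (HA H \<Gamma> A) x (\<Gamma> 1)))))"

text \<open>The trace-preserving conditional expectation M_B \<rightarrow> M_A extending the retraction EA
  (trace on M_A is x \<mapsto> \<langle>x \<Omega>, \<Omega>\<rangle>; outside M_B the map is set to 0).\<close>
definition cexp :: "('a::ring_1) pvn \<Rightarrow> ('h::ab_group_add) hsp \<Rightarrow> ('a \<Rightarrow> 'h) \<Rightarrow> 'a set \<Rightarrow> 'a set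
     \<Rightarrow> ('a \<Rightarrow> 'a) \<Rightarrow> ('h \<Rightarrow> 'h) \<Rightarrow> ('h \<Rightarrow> 'h)" where
  "cexp P H \<Gamma> A B EA = (THE E.
     (\<forall>y. y \<notin> vN H \<Gamma> B \<longrightarrow> E y = (\<lambda>_. 0)) \<and>
     (\<forall>y\<in>vN H \<Gamma> B. E y \<in> vN H \<Gamma> A) \<and>
     (\<forall>x\<in>vN H \<Gamma> A. E (iota P H \<Gamma> A B x) = x) \<and>
     (\<forall>y1\<in>vN H \<Gamma> B. \<forall>y2\<in>vN H \<Gamma> B. E (\<lambda>v. y1 v + y2 v) = (\<lambda>v. E y1 v + E y2 v)) \<and>
     (\<forall>c. \<forall>y\<in>vN H \<Gamma> B. E (\<lambda>v. hsc H c (y v)) = (\<lambda>v. hsc H c (E y v))) \<and>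
     (\<forall>x\<in>vN H \<Gamma> A. \<forall>z\<in>vN H \<Gamma> A. \<forall>y\<in>vN H \<Gamma> B.
        E (iota P H \<Gamma> A B x \<circ> y \<circ> iota P H \<Gamma> A B z) = x \<circ> E y \<circ> z) \<and>
     (\<forall>y\<in>vN H \<Gamma> B. \<forall>v. Im (hip H (E (adj H (HA H \<Gamma> B) y \<circ> y) v) v) = 0 \<and>
                         Re (hip H (E (adj H (HA H \<Gamma> B) y \<circ> y) v) v) \<ge> 0) \<and>
     (\<forall>y\<in>vN H \<Gamma> B. hip H (E y (\<Gamma> 1)) (\<Gamma> 1) = hip H (y (\<Gamma> 1)) (\<Gamma> 1)) \<and>
     (\<forall>b\<in>B. E (lam H \<Gamma> B b) = lam H \<Gamma> A (EA b)))"

end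

theory Submission
  imports Defs
begin

locale hs = fixes H :: "('h::ab_group_add) hsp" assumes hilb: "hilb H"
begin

abbreviation sc where "sc \<equiv> hsc H"
abbreviation ip where "ip \<equiv> hip H"
abbreviation nm where "nm \<equiv> hnorm H"

lemma sc_add0: "\<forall>c x y. sc c (x + y) = sc c x + sc c y"
  using hilb unfolding hilb_def by (elim conjE) assumption
lemma sc_add: "sc c (x + y) = sc c x + sc c y"
  using sc_add0 by blast
lemma sc_add20: "\<forall>c d x. sc (c + d) x = sc c x + sc d x"
  using hilb unfolding hilb_def by (elim conjE) assumption
lemma sc_add2: "sc (c + d) x = sc c x + sc d x"
  using sc_add20 by blast
lemma sc_mult0: "\<forall>c d x. sc (c * d) x = sc c (sc d x)"
  using hilb unfolding hilb_def by (elim conjE) assumption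
lemma sc_mult: "sc (c * d) x = sc c (sc d x)"
  using sc_mult0 by blast
lemma sc_one0: "\<forall>x. sc 1 x = x"
  using hilb unfolding hilb_def by (elim conjE) assumption
lemma sc_one[simp]: "sc 1 x = x"
  using sc_one0 by blast
lemma ip_add10: "\<forall>x y z. ip (x + y) z = ip x z + ip y z"
  using hilb unfolding hilb_def by (elim conjE) assumption
lemma ip_add1: "ip (x + y) z = ip x z + ip y z"
  using ip_add10 by blast
lemma ip_sc10: "\<forall>c x y. ip (sc c x) y = c * ip x y"
  using hilb unfolding hilb_def by (elim conjE) assumption
lemma ip_sc1: "ip (sc c x) y = c * ip x y"
  using ip_sc10 by blast
lemma ip_conj0: "\<forall>x y. ip y x = cnj (ip x y)"
  using hilb unfolding hilb_def by (elim conjE) assumption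
lemma ip_conj: "ip y x = cnj (ip x y)"
  using ip_conj0 by blast
lemma ip_pos0: "\<forall>x. Im (ip x x) = 0 \<and> Re (ip x x) \<ge> 0"
  using hilb unfolding hilb_def by (elim conjE) assumption
lemma ip_pos: "Im (ip x x) = 0" "Re (ip x x) \<ge> 0" using ip_pos0 by auto
lemma ip_def00: "\<forall>x. ip x x = 0 \<longrightarrow> x = 0"
  using hilb unfolding hilb_def by (elim conjE) assumption
lemma ip_def0: "ip x x = 0 \<Longrightarrow> x = 0" using ip_def00 by auto
lemma complete0: "\<forall>X. hcauchy H X \<longrightarrow> (\<exists>l. hconv H X l)"
  using hilb unfolding hilb_def by (elim conjE) assumption
lemma complete: "hcauchy H X \<Longrightarrow> \<exists>l. hconv H X l" using complete0 by auto

lemma sc_zero[simp]: "sc 0 x = 0"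
proof -
  have "sc 0 x = sc 0 x + sc 0 x" using sc_add2[of 0 0 x] by simp
  thus ?thesis by simp
qed
lemma sc_0[simp]: "sc c 0 = 0"
proof -
  have "sc c 0 = sc c 0 + sc c 0" using sc_add[of c 0 0] by simp
  thus ?thesis by simp
qed
lemma sc_minus: "sc c (- x) = - sc c x"
  using sc_add[of c x "-x"] minus_unique[of "sc c x" "sc c (-x)"] by simp
lemma sc_diff: "sc c (x - y) = sc c x - sc c y"
  using sc_add[of c x "-y"] sc_minus by simp
lemma sc_neg: "sc (- c) x = - sc c x"
  using sc_add2[of c "-c" x] minus_unique[of "sc c x" "sc (-c) x"] by simp
lemma sc_m1: "sc (-1) x = - x" using sc_neg[of 1 x] by simp
lemma sc_diff2: "sc (c - d) x = sc c x - sc d x"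
  using sc_add2[of c "-d" x] sc_neg by simp

lemma ip_add2: "ip x (y + z) = ip x y + ip x z"
  using ip_conj[of x "y+z"] ip_add1[of y z x] ip_conj[of x y] ip_conj[of x z] by simp
lemma ip_sc2: "ip x (sc c y) = cnj c * ip x y"
  using ip_conj[of x "sc c y"] ip_sc1[of c y x] ip_conj[of x y] by simp
lemma ip_01[simp]: "ip 0 y = 0" using ip_sc1[of 0 0 y] by simp
lemma ip_02[simp]: "ip x 0 = 0" using ip_sc2[of x 0 0] by simp
lemma ip_minus1: "ip (- x) y = - ip x y" using ip_sc1[of "-1" x y] sc_m1 by simp
lemma ip_minus2: "ip x (- y) = - ip x y" using ip_sc2[of x "-1" y] sc_m1 by simp
lemma ip_diff1: "ip (x - y) z = ip x z - ip y z" using ip_add1[of x "-y" z] ip_minus1 by simp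
lemma ip_diff2: "ip x (y - z) = ip x y - ip x z" using ip_add2[of x y "-z"] ip_minus2 by simp

lemmas ip_simps = ip_add1 ip_add2 ip_sc1 ip_sc2 ip_diff1 ip_diff2 ip_minus1 ip_minus2

lemma ip_self: "ip x x = complex_of_real (Re (ip x x))"
  using ip_pos[of x] by (simp add: complex_eq_iff)

lemma nm_sq: "(nm x)^2 = Re (ip x x)"
  unfolding hnorm_def using ip_pos(2)[of x] by simp
lemma nm_ge0[simp]: "nm x \<ge> 0" unfolding hnorm_def using ip_pos(2)[of x] by simp
lemma nm_0[simp]: "nm 0 = 0" unfolding hnorm_def by simp
lemma nm_eq0: "nm x = 0 \<longleftrightarrow> x = 0"
proof
  assume "nm x = 0"
  then have "Re (ip x x) = 0" using nm_sq[of x] by simp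
  then have "ip x x = 0" using ip_self[of x] by simp
  thus "x = 0" by (rule ip_def0)
qed simp
lemma ip_self_nm: "ip x x = complex_of_real ((nm x)^2)"
  using ip_self nm_sq by simp

lemma nm_sc: "nm (sc c x) = cmod c * nm x"
proof -
  have "Re (ip (sc c x) (sc c x)) = (cmod c)^2 * Re (ip x x)"
  proof -
    have "ip (sc c x) (sc c x) = (c * cnj c) * ip x x" by (simp add: ip_sc1 ip_sc2)
    also have "c * cnj c = complex_of_real ((cmod c)^2)" using complex_norm_square[of c] by simp
    finally show ?thesis using ip_self[of x]
      by (metis Re_complex_of_real of_real_mult)
  qed
  thus ?thesis unfolding hnorm_def by (simp add: real_sqrt_mult)
qed
lemma nm_minus: "nm (- x) = nm x" using nm_sc[of "-1" x] sc_m1 by simp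
lemma nm_diff_sym: "nm (x - y) = nm (y - x)" using nm_minus[of "x - y"] by simp

lemma cauchy_schwarz: "cmod (ip x y) \<le> nm x * nm y"
proof (cases "y = 0")
  case True thus ?thesis by simp
next
  case False
  define t where "t = ip x y / ip y y"
  have yy: "ip y y = complex_of_real ((nm y)^2)" by (rule ip_self_nm)
  have ny: "nm y > 0" using False nm_eq0 nm_ge0 by (metis less_eq_real_def)
  have "0 \<le> Re (ip (x - sc t y) (x - sc t y))" using ip_pos by simp
  also have "ip (x - sc t y) (x - sc t y) = ip x x - cnj t * ip x y - t * ip y x + t * cnj t * ip y y"
    by (simp add: ip_simps algebra_simps)
  also have "t * cnj t * ip y y = ip x y * cnj (ip x y) / ip y y"
    unfolding t_def using yy ny by (simp add: field_simps)
  also have "cnj t * ip x y = ip x y * cnj (ip x y) / ip y y"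
    unfolding t_def using yy by (simp add: field_simps)
  also have "t * ip y x = ip x y * cnj (ip x y) / ip y y"
    unfolding t_def using ip_conj[of y x] by simp
  finally have "0 \<le> Re (ip x x - ip x y * cnj (ip x y) / ip y y)" by simp
  also have "ip x y * cnj (ip x y) = complex_of_real ((cmod (ip x y))^2)"
    using complex_norm_square[of "ip x y"] by simp
  finally have "0 \<le> (nm x)^2 - (cmod (ip x y))^2 / (nm y)^2"
    using yy nm_sq[of x] by (simp del: of_real_power add: of_real_power[symmetric] Re_divide_of_real)
  then have "(cmod (ip x y))^2 \<le> (nm x)^2 * (nm y)^2" using ny by (simp add: field_simps)
  then have "(cmod (ip x y))^2 \<le> (nm x * nm y)^2" by (simp add: power_mult_distrib)
  thus ?thesis using power2_le_imp_le by (simp add: mult_nonneg_nonneg)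
qed

lemma nm_add_sq: "(nm (x + y))^2 = (nm x)^2 + 2 * Re (ip x y) + (nm y)^2"
proof -
  have "ip (x+y) (x+y) = ip x x + (ip x y + cnj (ip x y)) + ip y y"
    using ip_conj[of y x] by (simp add: ip_simps)
  thus ?thesis using nm_sq by simp
qed

lemma nm_triangle: "nm (x + y) \<le> nm x + nm y"
proof -
  have "Re (ip x y) \<le> nm x * nm y"
    using cauchy_schwarz[of x y] complex_Re_le_cmod[of "ip x y"] by linarith
  then have "(nm (x + y))^2 \<le> (nm x + nm y)^2" using nm_add_sq[of x y]
    by (simp add: power2_sum)
  thus ?thesis using power2_le_imp_le by simp
qed

lemma nm_triangle_diff: "nm (x - z) \<le> nm (x - y) + nm (y - z)"
  using nm_triangle[of "x - y" "y - z"] by simp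

lemma nm_diff_le: "nm x - nm y \<le> nm (x - y)"
  using nm_triangle[of "x - y" y] by simp

lemma parallelogram: "(nm (x + y))^2 + (nm (x - y))^2 = 2 * (nm x)^2 + 2 * (nm y)^2"
proof -
  have "(nm (x - y))^2 = (nm x)^2 - 2 * Re (ip x y) + (nm y)^2"
    using nm_add_sq[of x "-y"] nm_minus[of y] by (simp add: ip_minus2)
  thus ?thesis using nm_add_sq[of x y] by simp
qed

end

lemma lim_null_cmp:
  fixes f :: "nat \<Rightarrow> 'b::real_normed_vector"
  assumes "\<And>n. norm (f n) \<le> g n" "g \<longlonglongrightarrow> 0"
  shows "f \<longlonglongrightarrow> 0"
  using assms(2)
proof (rule metric_tendsto_imp_tendsto)
  show "eventually (\<lambda>x. dist (f x) 0 \<le> dist (g x) 0) sequentially"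
  proof (rule always_eventually, rule allI)
    fix n
    have "norm (f n) \<le> g n" by (rule assms(1))
    thus "dist (f n) 0 \<le> dist (g n) 0" using abs_ge_self[of "g n"] by (simp add: dist_norm)
  qed
qed

context hs begin

lemma hconv_iff: "hconv H X l \<longleftrightarrow> (\<lambda>n. nm (X n - l)) \<longlonglongrightarrow> 0"
  unfolding hconv_def LIMSEQ_def dist_real_def by simp

lemma hconv_le:
  assumes "\<And>n. nm (Y n - y) \<le> g n" "g \<longlonglongrightarrow> 0"
  shows "hconv H Y y"
  unfolding hconv_iff
  by (rule lim_null_cmp[OF _ assms(2)]) (use assms(1) in simp)

lemma hconv_const: "hconv H (\<lambda>n. x) x"
  unfolding hconv_iff by simp

lemma hconv_add: "hconv H X x \<Longrightarrow> hconv H Y y \<Longrightarrow> hconv H (\<lambda>n. X n + Y n) (x + y)"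
  unfolding hconv_iff
  apply (rule lim_null_cmp[where g="\<lambda>n. nm (X n - x) + nm (Y n - y)"])
   apply (simp add: add_diff_add nm_triangle)
  using tendsto_add_zero by fastforce

lemma hconv_sc: "hconv H X x \<Longrightarrow> hconv H (\<lambda>n. sc c (X n)) (sc c x)"
  unfolding hconv_iff
  apply (rule lim_null_cmp[where g="\<lambda>n. cmod c * nm (X n - x)"])
   apply (simp add: sc_diff[symmetric] nm_sc)
  using tendsto_mult_right_zero by blast

lemma hconv_minus: "hconv H X x \<Longrightarrow> hconv H (\<lambda>n. - X n) (- x)"
  using hconv_sc[of X x "-1"] by (simp add: sc_m1)

lemma hconv_diff: "hconv H X x \<Longrightarrow> hconv H Y y \<Longrightarrow> hconv H (\<lambda>n. X n - Y n) (x - y)"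
  using hconv_add[of X x "\<lambda>n. - Y n" "-y"] hconv_minus[of Y y] by simp

lemma hconv_zero_iff: "hconv H X x \<longleftrightarrow> hconv H (\<lambda>n. X n - x) 0"
  unfolding hconv_iff by simp

lemma hconv_unique: assumes "hconv H X x" "hconv H X y" shows "x = y"
proof -
  have "(\<lambda>n. nm (X n - x) + nm (X n - y)) \<longlonglongrightarrow> 0"
    using assms tendsto_add_zero unfolding hconv_iff by fastforce
  moreover have "nm (x - y) \<le> nm (X n - x) + nm (X n - y)" for n
  proof -
    have "nm (x - y) \<le> nm (x - X n) + nm (X n - y)" by (rule nm_triangle_diff)
    thus ?thesis using nm_diff_sym[of x "X n"] by simp
  qed
  ultimately have "nm (x - y) \<le> 0"
    by (intro LIMSEQ_le_const) auto
  then have "nm (x - y) = 0" using nm_ge0[of "x - y"] by linarith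
  thus ?thesis using nm_eq0 by simp
qed

lemma hconv_nm: assumes "hconv H X x" shows "(\<lambda>n. nm (X n)) \<longlonglongrightarrow> nm x"
proof -
  have "norm (nm (X n) - nm x) \<le> nm (X n - x)" for n
  proof -
    have "nm (X n) - nm x \<le> nm (X n - x)" by (rule nm_diff_le)
    moreover have "nm x - nm (X n) \<le> nm (X n - x)" using nm_diff_le[of x "X n"] nm_diff_sym by simp
    ultimately show ?thesis by (simp add: abs_le_iff)
  qed
  then have "(\<lambda>n. nm (X n) - nm x) \<longlonglongrightarrow> 0"
    using assms unfolding hconv_iff by (rule lim_null_cmp)
  thus ?thesis by (simp add: LIM_zero_iff)
qed

lemma hconv_ip: assumes "hconv H X x" "hconv H Y y"
  shows "(\<lambda>n. ip (X n) (Y n)) \<longlonglongrightarrow> ip x y"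
proof -
  have "\<And>n. ip (X n) (Y n) - ip x y = ip (X n - x) (Y n) + ip x (Y n - y)"
    by (simp add: ip_simps)
  then have "norm (ip (X n) (Y n) - ip x y) \<le> nm (X n - x) * nm (Y n) + nm x * nm (Y n - y)" for n
  proof -
    have "norm (ip (X n) (Y n) - ip x y) \<le> norm (ip (X n - x) (Y n)) + norm (ip x (Y n - y))"
      using \<open>\<And>n. ip (X n) (Y n) - ip x y = _\<close>[of n] by (simp add: norm_triangle_ineq)
    also have "\<dots> \<le> nm (X n - x) * nm (Y n) + nm x * nm (Y n - y)"
      by (intro add_mono cauchy_schwarz)
    finally show ?thesis .
  qed
  moreover have "(\<lambda>n. nm (X n - x) * nm (Y n) + nm x * nm (Y n - y)) \<longlonglongrightarrow> 0 * nm y + nm x * 0"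
    using assms hconv_nm[OF assms(2)] unfolding hconv_iff
    by (intro tendsto_intros) auto
  then have "(\<lambda>n. nm (X n - x) * nm (Y n) + nm x * nm (Y n - y)) \<longlonglongrightarrow> 0" by simp
  ultimately have "(\<lambda>n. ip (X n) (Y n) - ip x y) \<longlonglongrightarrow> 0"
    by (rule lim_null_cmp)
  thus ?thesis by (simp add: LIM_zero_iff)
qed

lemma hconv_cauchy: assumes "hconv H X x" shows "hcauchy H X"
  unfolding hcauchy_def
proof (intro allI impI)
  fix e :: real assume "e > 0"
  then obtain N where N: "\<forall>n\<ge>N. nm (X n - x) < e/2"
    using assms[unfolded hconv_def, rule_format, of "e/2"] \<open>e > 0\<close> by auto
  show "\<exists>N. \<forall>m\<ge>N. \<forall>n\<ge>N. nm (X m - X n) < e"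
  proof (intro exI allI impI)
    fix m n assume "m \<ge> N" "n \<ge> N"
    have "nm (X m - X n) \<le> nm (X m - x) + nm (x - X n)" by (rule nm_triangle_diff)
    also have "nm (x - X n) = nm (X n - x)" by (rule nm_diff_sym)
    finally show "nm (X m - X n) < e" using N[rule_format, OF \<open>m \<ge> N\<close>] N[rule_format, OF \<open>n \<ge> N\<close>] by linarith
  qed
qed

definition subsp :: "'h set \<Rightarrow> bool" where
  "subsp K \<longleftrightarrow> 0 \<in> K \<and> (\<forall>x\<in>K. \<forall>y\<in>K. x + y \<in> K) \<and> (\<forall>c. \<forall>x\<in>K. sc c x \<in> K)"

definition csub :: "'h set \<Rightarrow> bool" where
  "csub K \<longleftrightarrow> subsp K \<and> hcl H K \<subseteq> K"

lemma subsp_0: "subsp K \<Longrightarrow> 0 \<in> K" unfolding subsp_def by blast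
lemma subsp_add: "subsp K \<Longrightarrow> x \<in> K \<Longrightarrow> y \<in> K \<Longrightarrow> x + y \<in> K" unfolding subsp_def by blast
lemma subsp_sc: "subsp K \<Longrightarrow> x \<in> K \<Longrightarrow> sc c x \<in> K" unfolding subsp_def by blast
lemma subsp_minus: "subsp K \<Longrightarrow> x \<in> K \<Longrightarrow> - x \<in> K" using subsp_sc[of K x "-1"] sc_m1 by simp
lemma subsp_diff: "subsp K \<Longrightarrow> x \<in> K \<Longrightarrow> y \<in> K \<Longrightarrow> x - y \<in> K"
  using subsp_add[of K x "-y"] subsp_minus by simp


lemma hcl_mono: "S \<subseteq> T \<Longrightarrow> hcl H S \<subseteq> hcl H T"
  unfolding hcl_def by blast

lemma hclI: "(\<And>n. X n \<in> S) \<Longrightarrow> hconv H X x \<Longrightarrow> x \<in> hcl H S"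
  unfolding hcl_def by blast

lemma hclE: assumes "x \<in> hcl H S" obtains X where "\<And>n. X n \<in> S" "hconv H X x"
  using assms unfolding hcl_def by blast

lemma hcl_sub: "S \<subseteq> hcl H S"
  using hclI[of "\<lambda>n. _"] hconv_const by blast

lemma hcl_idem: "hcl H (hcl H S) \<subseteq> hcl H S"
proof
  fix x assume "x \<in> hcl H (hcl H S)"
  then obtain Y where Y: "\<And>n. Y n \<in> hcl H S" "hconv H Y x" unfolding hcl_def by blast
  have "\<forall>n. \<exists>s. s \<in> S \<and> nm (s - Y n) < 1 / Suc n"
  proof
    fix n
    obtain Z where Z: "\<And>m. Z m \<in> S" "hconv H Z (Y n)" using Y(1) unfolding hcl_def by blast
    then obtain m where "nm (Z m - Y n) < 1 / Suc n"
      using Z(2)[unfolded hconv_def, rule_format, of "1 / Suc n"] by auto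
    thus "\<exists>s. s \<in> S \<and> nm (s - Y n) < 1 / Suc n" using Z(1) by blast
  qed
  then have "\<exists>X. \<forall>n. X n \<in> S \<and> nm (X n - Y n) < 1 / Suc n" by (rule choice)
  then obtain X where "\<forall>n. X n \<in> S \<and> nm (X n - Y n) < 1 / Suc n" by blast
  then have X: "\<And>n. X n \<in> S" "\<And>n. nm (X n - Y n) < 1 / Suc n" by auto
  have "hconv H X x"
  proof (rule hconv_le)
    show "nm (X n - x) \<le> 1 / Suc n + nm (Y n - x)" for n
      using nm_triangle_diff[of "X n" x "Y n"] X(2)[of n] by linarith
    show "(\<lambda>n. 1 / real (Suc n) + nm (Y n - x)) \<longlonglongrightarrow> 0"
      using Y(2) unfolding hconv_iff
      using LIMSEQ_Suc[OF lim_inverse_n'] tendsto_add[of _ 0 _ _ 0] by fastforce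
  qed
  thus "x \<in> hcl H S" by (rule hclI[OF X(1)])
qed

lemma hcl_closed: "hcl H (hcl H S) = hcl H S"
  using hcl_idem hcl_sub by blast

lemma hcl_subsp: assumes "subsp S" shows "csub (hcl H S)"
  unfolding csub_def subsp_def
proof (intro conjI ballI allI)
  show "0 \<in> hcl H S" using hcl_sub subsp_0[OF assms] by blast
  show "x + y \<in> hcl H S" if hxy: "x \<in> hcl H S" "y \<in> hcl H S" for x y
  proof -
    obtain X where X: "\<And>n. X n \<in> S" "hconv H X x"
      using hxy(1) unfolding hcl_def by blast
    obtain Y where Y: "\<And>n. Y n \<in> S" "hconv H Y y"
      using hxy(2) unfolding hcl_def by blast
    show ?thesis
    proof (rule hclI[of "\<lambda>n. X n + Y n"])
      show "X n + Y n \<in> S" for n using subsp_add[OF assms X(1) Y(1)] .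
      show "hconv H (\<lambda>n. X n + Y n) (x + y)" using hconv_add[OF X(2) Y(2)] .
    qed
  qed
  show "sc c x \<in> hcl H S" if hx: "x \<in> hcl H S" for c x
  proof -
    obtain X where X: "\<And>n. X n \<in> S" "hconv H X x" using hx unfolding hcl_def by blast
    show ?thesis
    proof (rule hclI[of "\<lambda>n. sc c (X n)"])
      show "sc c (X n) \<in> S" for n using subsp_sc[OF assms X(1)] .
      show "hconv H (\<lambda>n. sc c (X n)) (sc c x)" using hconv_sc[OF X(2)] .
    qed
  qed
  show "hcl H (hcl H S) \<subseteq> hcl H S" by (rule hcl_idem)
qed

lemma csub_subsp: "csub K \<Longrightarrow> subsp K" unfolding csub_def by blast
lemma csub_closed: "csub K \<Longrightarrow> (\<And>n. X n \<in> K) \<Longrightarrow> hconv H X x \<Longrightarrow> x \<in> K"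
  unfolding csub_def using hclI[of X K x] by blast

lemma UNIV_csub: "csub UNIV"
  unfolding csub_def subsp_def by simp


subsection \<open>Projection theorem\<close>

lemma cs_aux:
  assumes "k \<noteq> 0"
  shows "Re (ip (w - sc (ip w k / ip k k) k) (w - sc (ip w k / ip k k) k)) = (nm w)^2 - (cmod (ip w k))^2 / (nm k)^2"
proof -
  define t where "t = ip w k / ip k k"
  have kk: "ip k k = complex_of_real ((nm k)^2)" by (rule ip_self_nm)
  have nk: "nm k > 0" using assms nm_eq0 nm_ge0 by (metis less_eq_real_def)
  have "ip (w - sc t k) (w - sc t k) = ip w w - cnj t * ip w k - t * ip k w + t * cnj t * ip k k"
    by (simp add: ip_simps algebra_simps)
  also have "t * cnj t * ip k k = ip w k * cnj (ip w k) / ip k k"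
    unfolding t_def using kk nk by (simp add: field_simps)
  also have "cnj t * ip w k = ip w k * cnj (ip w k) / ip k k"
    unfolding t_def using kk by (simp add: field_simps)
  also have "t * ip k w = ip w k * cnj (ip w k) / ip k k"
    unfolding t_def using ip_conj[of k w] by simp
  finally have "ip (w - sc t k) (w - sc t k) = ip w w - ip w k * cnj (ip w k) / ip k k" by simp
  also have "ip w k * cnj (ip w k) = complex_of_real ((cmod (ip w k))^2)"
    using complex_norm_square[of "ip w k"] by simp
  finally show ?thesis
    using kk nm_sq[of w] unfolding t_def
    by (simp del: of_real_power add: of_real_power[symmetric] Re_divide_of_real)
qed

lemma min_orth:
  assumes K: "subsp K" and p: "p \<in> K" and min: "\<And>k. k \<in> K \<Longrightarrow> nm (v - p) \<le> nm (v - k)"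
    and k: "k \<in> K"
  shows "ip (v - p) k = 0"
proof (rule ccontr)
  assume ne: "ip (v - p) k \<noteq> 0"
  then have k0: "k \<noteq> 0" by auto
  define t where "t = ip (v - p) k / ip k k"
  have "p + sc t k \<in> K" using K p k subsp_add subsp_sc by blast
  then have "nm (v - p) \<le> nm (v - (p + sc t k))" by (rule min)
  then have "(nm (v - p))^2 \<le> (nm ((v - p) - sc t k))^2"
    by (simp add: diff_diff_eq power_mono)
  also have "\<dots> = (nm (v - p))^2 - (cmod (ip (v - p) k))^2 / (nm k)^2"
    using cs_aux[OF k0, of "v - p"] nm_sq unfolding t_def by simp
  finally have "(cmod (ip (v - p) k))^2 / (nm k)^2 \<le> 0" by simp
  moreover have "(cmod (ip (v - p) k))^2 / (nm k)^2 > 0"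
    using ne k0 nm_eq0 nm_ge0 by (simp add: less_eq_real_def)
  ultimately show False by simp
qed

lemma proj_exists:
  assumes K: "csub K"
  shows "\<exists>p\<in>K. \<forall>k\<in>K. ip (v - p) k = 0"
proof -
  have S: "subsp K" using K csub_subsp by blast
  define D where "D = (\<lambda>k. nm (v - k)) ` K"
  define d where "d = Inf D"
  have Dne: "D \<noteq> {}" using subsp_0[OF S] unfolding D_def by blast
  have Dbdd: "bdd_below D" unfolding D_def by (rule bdd_belowI[of _ 0]) auto
  have dle: "d \<le> nm (v - k)" if "k \<in> K" for k
    unfolding d_def D_def using Dbdd that unfolding D_def by (simp add: cInf_lower)
  have d0: "d \<ge> 0" unfolding d_def using Dne by (rule cInf_greatest) (auto simp: D_def)
  have "\<forall>n. \<exists>k. k \<in> K \<and> nm (v - k) < d + 1 / Suc n"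
  proof
    fix n
    have "d < d + 1 / Suc n" by simp
    then obtain y where "y \<in> D" "y < d + 1 / Suc n" unfolding d_def using Dne
      by (meson cInf_lessD)
    thus "\<exists>k. k \<in> K \<and> nm (v - k) < d + 1 / Suc n" unfolding D_def by blast
  qed
  then have "\<exists>kk. \<forall>n. kk n \<in> K \<and> nm (v - kk n) < d + 1 / Suc n" by (rule choice)
  then obtain kk where kk: "\<forall>n. kk n \<in> K \<and> nm (v - kk n) < d + 1 / Suc n" by blast
  have kkK: "\<And>n. kk n \<in> K" and kkd: "\<And>n. nm (v - kk n) < d + 1 / Suc n" using kk by auto
  have bnd: "(nm (kk m - kk n))^2 \<le> 4 * d * (1 / Suc m + 1 / Suc n) + 2 * (1 / Suc m) + 2 * (1 / Suc n)" for m n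
  proof -
    define em where "em = 1 / real (Suc m)"
    define en where "en = 1 / real (Suc n)"
    have em: "0 < em" "em \<le> 1" unfolding em_def by (auto simp: field_simps)
    have en: "0 < en" "en \<le> 1" unfolding en_def by (auto simp: field_simps)
    define x where "x = v - kk m"
    define y where "y = v - kk n"
    define mid where "mid = sc (1/2) (kk m + kk n)"
    have midK: "mid \<in> K" unfolding mid_def using S kkK subsp_add subsp_sc by blast
    have "x + y = sc 2 (v - mid)"
    proof -
      have "sc 2 (v - mid) = sc 2 v - sc (2 * (1/2)) (kk m + kk n)"
        unfolding mid_def by (simp add: sc_diff sc_mult[symmetric])
      also have "sc 2 v = v + v" using sc_add2[of 1 1 v] by simp
      finally show ?thesis unfolding x_def y_def by (simp add: algebra_simps)
    qed
    then have "nm (x + y) = 2 * nm (v - mid)" by (simp add: nm_sc)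
    then have xy: "nm (x + y) \<ge> 2 * d" using dle[OF midK] by simp
    have "x - y = kk n - kk m" unfolding x_def y_def by simp
    then have "(nm (kk m - kk n))^2 = 2 * (nm x)^2 + 2 * (nm y)^2 - (nm (x + y))^2"
      using parallelogram[of x y] nm_diff_sym[of "kk m" "kk n"] by simp
    also have "(nm (x + y))^2 \<ge> (2 * d)^2" using power_mono[OF xy, of 2] d0 by simp
    moreover have "(nm x)^2 \<le> (d + em)^2" using kkd[of m] unfolding x_def em_def
      by (simp add: power_mono less_imp_le)
    moreover have "(nm y)^2 \<le> (d + en)^2" using kkd[of n] unfolding y_def en_def
      by (simp add: power_mono less_imp_le)
    ultimately have "(nm (kk m - kk n))^2 \<le> 2 * (d + em)^2 + 2 * (d + en)^2 - (2 * d)^2"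
      by linarith
    also have "\<dots> = 4 * d * (em + en) + 2 * em * em + 2 * en * en" by (simp add: power2_eq_square algebra_simps)
    also have "\<dots> \<le> 4 * d * (em + en) + 2 * em + 2 * en"
    proof -
      have "em * em \<le> em" using mult_right_mono[of em 1 em] em by simp
      moreover have "en * en \<le> en" using mult_right_mono[of en 1 en] en by simp
      ultimately show ?thesis by linarith
    qed
    finally show ?thesis unfolding em_def en_def .
  qed
  have cau: "hcauchy H kk"
    unfolding hcauchy_def
  proof (intro allI impI)
    fix e :: real assume e: "e > 0"
    obtain N :: nat where N: "(4 * d * 2 + 4) / e^2 < real N"
      using reals_Archimedean2 by blast
    have Npos: "real N > 0" using N e d0
      by (smt (verit, best) divide_nonneg_pos zero_less_power)
    show "\<exists>N. \<forall>m\<ge>N. \<forall>n\<ge>N. nm (kk m - kk n) < e"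
    proof (intro exI allI impI)
      fix m n assume mN: "m \<ge> N" and nN: "n \<ge> N"
      have im: "1 / real (Suc m) \<le> 1 / real N" using mN Npos by (simp add: frac_le)
      have inn: "1 / real (Suc n) \<le> 1 / real N" using nN Npos by (simp add: frac_le)
      have "(nm (kk m - kk n))^2 \<le> 4 * d * (1 / Suc m + 1 / Suc n) + 2 * (1 / Suc m) + 2 * (1 / Suc n)"
        by (rule bnd)
      also have "\<dots> \<le> 4 * d * (2 / real N) + 2 * (1 / real N) + 2 * (1 / real N)"
        using im inn d0 by (intro add_mono mult_left_mono) auto
      also have "\<dots> = (4 * d * 2 + 4) / real N" by (simp add: field_simps add_divide_distrib)
      also have "\<dots> < e^2" using N Npos e by (simp add: field_simps)
      finally have "(nm (kk m - kk n))^2 < e^2" .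
      thus "nm (kk m - kk n) < e" using e by (simp add: power_less_imp_less_base less_imp_le)
    qed
  qed
  then obtain p where p: "hconv H kk p" using complete by blast
  have pK: "p \<in> K" using csub_closed[OF K kkK p] .
  have "nm (v - p) \<le> d"
  proof -
    have l: "(\<lambda>n. nm (v - kk n)) \<longlonglongrightarrow> nm (v - p)"
      using hconv_nm[OF hconv_diff[OF hconv_const p]] .
    have l2: "(\<lambda>n. d + 1 / real (Suc n)) \<longlonglongrightarrow> d + 0"
      by (intro tendsto_intros LIMSEQ_Suc[OF lim_inverse_n'])
    show ?thesis using LIMSEQ_le[OF l l2] kkd less_imp_le by auto
  qed
  then have "\<And>k. k \<in> K \<Longrightarrow> nm (v - p) \<le> nm (v - k)" using dle by fastforce
  then show ?thesis using min_orth[OF S pK] pK by blast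
qed

definition proj :: "'h set \<Rightarrow> 'h \<Rightarrow> 'h" where
  "proj K v = (THE p. p \<in> K \<and> (\<forall>k\<in>K. ip (v - p) k = 0))"

lemma orth_self: "ip x x = 0 \<Longrightarrow> x = 0" by (rule ip_def0)

lemma proj_unique:
  assumes K: "csub K" and "p \<in> K" "\<forall>k\<in>K. ip (v - p) k = 0" "q \<in> K" "\<forall>k\<in>K. ip (v - q) k = 0"
  shows "p = q"
proof -
  have "p - q \<in> K" using assms subsp_diff csub_subsp by blast
  then have "ip (v - q) (p - q) - ip (v - p) (p - q) = 0" using assms by simp
  then have "ip ((v - q) - (v - p)) (p - q) = 0" by (simp only: ip_diff1)
  then have "ip (p - q) (p - q) = 0" by simp
  thus ?thesis using ip_def0[of "p - q"] by simp
qed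

lemma proj_char:
  assumes K: "csub K"
  shows "proj K v \<in> K \<and> (\<forall>k\<in>K. ip (v - proj K v) k = 0)"
proof -
  obtain p where ex: "p \<in> K \<and> (\<forall>k\<in>K. ip (v - p) k = 0)" using proj_exists[OF K] by blast
  have un: "\<And>q. q \<in> K \<and> (\<forall>k\<in>K. ip (v - q) k = 0) \<Longrightarrow> q = p"
    using proj_unique[OF K] ex by blast
  show ?thesis unfolding proj_def by (rule theI[where P="\<lambda>p. p \<in> K \<and> (\<forall>k\<in>K. ip (v - p) k = 0)", OF ex un])
qed

lemma proj_in: "csub K \<Longrightarrow> proj K v \<in> K" using proj_char by blast
lemma proj_orth: "csub K \<Longrightarrow> k \<in> K \<Longrightarrow> ip (v - proj K v) k = 0" using proj_char by blast
lemma proj_ip: "csub K \<Longrightarrow> k \<in> K \<Longrightarrow> ip (proj K v) k = ip v k"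
  using proj_orth[of K k v] by (simp add: ip_simps)
lemma proj_ip2: "csub K \<Longrightarrow> k \<in> K \<Longrightarrow> ip k (proj K v) = ip k v"
  using proj_ip[of K k v] ip_conj[of k "proj K v"] ip_conj[of k v] by simp

lemma proj_eqI:
  assumes K: "csub K" and p: "p \<in> K" and e: "\<And>k. k \<in> K \<Longrightarrow> ip v k = ip p k"
  shows "proj K v = p"
proof -
  have "\<forall>k\<in>K. ip (v - p) k = 0" using e by (simp add: ip_diff1)
  moreover have "proj K v \<in> K" "\<forall>k\<in>K. ip (v - proj K v) k = 0" using proj_char[OF K, of v] by auto
  ultimately show ?thesis using proj_unique[OF K, of "proj K v" v p] p by blast
qed

lemma proj_id: "csub K \<Longrightarrow> v \<in> K \<Longrightarrow> proj K v = v"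
  by (rule proj_eqI) simp_all

lemma proj_add: "csub K \<Longrightarrow> proj K (x + y) = proj K x + proj K y"
  by (rule proj_eqI) (auto simp: ip_simps proj_ip proj_in subsp_add csub_subsp)

lemma proj_sc: "csub K \<Longrightarrow> proj K (sc c x) = sc c (proj K x)"
  by (rule proj_eqI) (auto simp: ip_simps proj_ip proj_in subsp_sc csub_subsp)

lemma proj_diff: "csub K \<Longrightarrow> proj K (x - y) = proj K x - proj K y"
  by (rule proj_eqI) (auto simp: ip_simps proj_ip proj_in subsp_diff csub_subsp)

lemma proj_sym: "csub K \<Longrightarrow> ip (proj K x) y = ip x (proj K y)"
proof -
  assume K: "csub K"
  have "ip (proj K x) y = ip (proj K x) (proj K y)"
    using proj_ip2[OF K proj_in[OF K], of x y] by simp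
  also have "\<dots> = ip x (proj K y)" using proj_ip[OF K proj_in[OF K]] by simp
  finally show ?thesis .
qed

lemma proj_nm: assumes K: "csub K" shows "nm (proj K x) \<le> nm x"
proof -
  have "ip x x = ip (proj K x) (proj K x) + ip (x - proj K x) (x - proj K x)"
  proof -
    have "ip (x - proj K x) (proj K x) = 0" using proj_orth[OF K proj_in[OF K]] .
    moreover have "ip (proj K x) (x - proj K x) = 0"
      using ip_conj[of "x - proj K x" "proj K x"] calculation by simp
    ultimately show ?thesis by (simp add: ip_simps algebra_simps)
  qed
  then have "(nm x)^2 = (nm (proj K x))^2 + (nm (x - proj K x))^2" using nm_sq by simp
  then have "(nm (proj K x))^2 \<le> (nm x)^2" by simp
  thus ?thesis using power2_le_imp_le by simp
qed

lemma proj_zero: "csub K \<Longrightarrow> (\<And>k. k \<in> K \<Longrightarrow> ip v k = 0) \<Longrightarrow> proj K v = 0"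
  by (rule proj_eqI) (auto simp: csub_subsp subsp_0)

end

context hs begin

lemma bop_in: "bop H K T \<Longrightarrow> x \<in> K \<Longrightarrow> T x \<in> K" unfolding bop_def by blast
lemma bop_out: "bop H K T \<Longrightarrow> x \<notin> K \<Longrightarrow> T x = 0" unfolding bop_def by blast
lemma bop_add: "bop H K T \<Longrightarrow> x \<in> K \<Longrightarrow> y \<in> K \<Longrightarrow> T (x + y) = T x + T y" unfolding bop_def by blast
lemma bop_sc: "bop H K T \<Longrightarrow> x \<in> K \<Longrightarrow> T (sc c x) = sc c (T x)" unfolding bop_def by blast
lemma bop_bound: assumes "bop H K T" obtains C where "C > 0" "\<And>x. x \<in> K \<Longrightarrow> nm (T x) \<le> C * nm x"
proof -
  obtain C where C: "\<forall>x\<in>K. nm (T x) \<le> C * nm x" using assms unfolding bop_def by blast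
  have "nm (T x) \<le> (max C 1) * nm x" if x: "x \<in> K" for x
  proof -
    have "nm (T x) \<le> C * nm x" using C x by blast
    also have "C * nm x \<le> max C 1 * nm x" by (rule mult_right_mono) simp_all
    finally show ?thesis .
  qed
  thus ?thesis using that[of "max C 1"] by simp
qed

lemma bop_diff: "subsp K \<Longrightarrow> bop H K T \<Longrightarrow> x \<in> K \<Longrightarrow> y \<in> K \<Longrightarrow> T (x - y) = T x - T y"
  using bop_add[of K T "x - y" y] subsp_diff[of K x y] by (simp add: eq_diff_eq)

lemma bop_zero: "subsp K \<Longrightarrow> bop H K T \<Longrightarrow> T 0 = 0"
  using bop_diff[of K T 0 0] subsp_0 by simp

lemma bop_cont:
  assumes K: "subsp K" and T: "bop H K T" and X: "\<And>n. X n \<in> K" and x: "x \<in> K" and c: "hconv H X x"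
  shows "hconv H (\<lambda>n. T (X n)) (T x)"
proof -
  obtain C where C: "C > 0" "\<And>x. x \<in> K \<Longrightarrow> nm (T x) \<le> C * nm x" using bop_bound[OF T] by blast
  show ?thesis
  proof (rule hconv_le)
    show "nm (T (X n) - T x) \<le> C * nm (X n - x)" for n
      using bop_diff[OF K T X x] C(2)[OF subsp_diff[OF K X x]] by simp
    show "(\<lambda>n. C * nm (X n - x)) \<longlonglongrightarrow> 0"
      using c unfolding hconv_iff by (simp add: tendsto_mult_right_zero)
  qed
qed

lemma bop_comp: assumes "subsp K" "bop H K S" "bop H K T" shows "bop H K (S \<circ> T)"
proof -
  obtain C where C: "C > 0" "\<And>x. x \<in> K \<Longrightarrow> nm (S x) \<le> C * nm x" using bop_bound[OF assms(2)] by blast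
  obtain D where D: "D > 0" "\<And>x. x \<in> K \<Longrightarrow> nm (T x) \<le> D * nm x" using bop_bound[OF assms(3)] by blast
  have "\<forall>x\<in>K. nm (S (T x)) \<le> (C * D) * nm x"
  proof
    fix x assume x: "x \<in> K"
    have "nm (S (T x)) \<le> C * nm (T x)" using C(2) bop_in[OF assms(3) x] by blast
    also have "\<dots> \<le> C * (D * nm x)" using D(2)[OF x] C(1) by simp
    finally show "nm (S (T x)) \<le> (C * D) * nm x" by simp
  qed
  moreover have "\<forall>x. x \<notin> K \<longrightarrow> S (T x) = 0"
    using bop_out[OF assms(3)] bop_zero[OF assms(1,2)] by simp
  moreover have "\<forall>x\<in>K. S (T x) \<in> K" using bop_in assms(2,3) by blast
  moreover have "\<forall>x\<in>K. \<forall>y\<in>K. S (T (x + y)) = S (T x) + S (T y)"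
    using bop_add[OF assms(3)] bop_add[OF assms(2)] bop_in[OF assms(3)] by simp
  moreover have "\<forall>c. \<forall>x\<in>K. S (T (sc c x)) = sc c (S (T x))"
    using bop_sc[OF assms(3)] bop_sc[OF assms(2)] bop_in[OF assms(3)] by simp
  ultimately show ?thesis unfolding bop_def comp_def by blast
qed

lemma bop_plus: assumes "subsp K" "bop H K S" "bop H K T" shows "bop H K (\<lambda>v. S v + T v)"
proof -
  obtain C where C: "C > 0" "\<And>x. x \<in> K \<Longrightarrow> nm (S x) \<le> C * nm x" using bop_bound[OF assms(2)] by blast
  obtain D where D: "D > 0" "\<And>x. x \<in> K \<Longrightarrow> nm (T x) \<le> D * nm x" using bop_bound[OF assms(3)] by blast
  have "\<forall>x\<in>K. nm (S x + T x) \<le> (C + D) * nm x"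
  proof
    fix x assume x: "x \<in> K"
    have "nm (S x + T x) \<le> nm (S x) + nm (T x)" by (rule nm_triangle)
    also have "\<dots> \<le> (C + D) * nm x" using C(2)[OF x] D(2)[OF x] by (simp add: distrib_right)
    finally show "nm (S x + T x) \<le> (C + D) * nm x" .
  qed
  moreover have "\<forall>x\<in>K. \<forall>y\<in>K. S (x + y) + T (x + y) = (S x + T x) + (S y + T y)"
    using assms bop_add by (simp add: algebra_simps)
  moreover have "\<forall>c. \<forall>x\<in>K. S (sc c x) + T (sc c x) = sc c (S x + T x)"
    using assms bop_sc by (simp add: sc_add)
  ultimately show ?thesis using assms unfolding bop_def
    by (auto intro: subsp_add)
qed

lemma bop_scal: assumes "subsp K" "bop H K T" shows "bop H K (\<lambda>v. sc c (T v))"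
proof -
  obtain C where C: "C > 0" "\<And>x. x \<in> K \<Longrightarrow> nm (T x) \<le> C * nm x" using bop_bound[OF assms(2)] by blast
  have "\<forall>x\<in>K. nm (sc c (T x)) \<le> (cmod c * C) * nm x"
    using C by (simp add: nm_sc mult.assoc mult_left_mono)
  moreover have "\<forall>d. \<forall>x\<in>K. sc c (T (sc d x)) = sc d (sc c (T x))"
  proof (intro allI ballI)
    fix d x assume "x \<in> K"
    then have "T (sc d x) = sc d (T x)" using bop_sc[OF assms(2)] by blast
    then show "sc c (T (sc d x)) = sc d (sc c (T x))"
      using sc_mult[of c d "T x"] sc_mult[of d c "T x"] by (simp add: mult.commute)
  qed
  ultimately show ?thesis using assms unfolding bop_def
    by (auto intro: subsp_sc simp: sc_add)
qed

lemma bop_id: "subsp K \<Longrightarrow> bop H K (\<lambda>v. if v \<in> K then v else 0)"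
  unfolding bop_def
  apply (intro conjI)
  apply (auto simp: subsp_add subsp_sc)[4]
  apply (rule exI[of _ 1])
  apply simp
  done

lemma dense_eq_scalar:
  assumes "\<And>X x. (\<And>n. X n \<in> D) \<Longrightarrow> hconv H X x \<Longrightarrow> (\<lambda>n. f (X n)) \<longlonglongrightarrow> f x"
    and "\<And>X x. (\<And>n. X n \<in> D) \<Longrightarrow> hconv H X x \<Longrightarrow> (\<lambda>n. g (X n)) \<longlonglongrightarrow> g x"
    and "\<And>d. d \<in> D \<Longrightarrow> f d = g d" and "x \<in> hcl H D"
  shows "f x = (g x :: 'b::t2_space)"
proof -
  obtain X where X: "\<And>n. X n \<in> D" "hconv H X x" using assms(4) unfolding hcl_def by blast
  have "(\<lambda>n. f (X n)) \<longlonglongrightarrow> f x" using assms(1)[OF X] .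
  moreover have "(\<lambda>n. f (X n)) \<longlonglongrightarrow> g x" using assms(2)[OF X] assms(3)[OF X(1)] by simp
  ultimately show ?thesis using LIMSEQ_unique by blast
qed

lemma dense_eq_vec:
  assumes "\<And>X x. (\<And>n. X n \<in> D) \<Longrightarrow> hconv H X x \<Longrightarrow> hconv H (\<lambda>n. f (X n)) (f x)"
    and "\<And>X x. (\<And>n. X n \<in> D) \<Longrightarrow> hconv H X x \<Longrightarrow> hconv H (\<lambda>n. g (X n)) (g x)"
    and "\<And>d. d \<in> D \<Longrightarrow> f d = g d" and "x \<in> hcl H D"
  shows "f x = g x"
proof -
  obtain X where X: "\<And>n. X n \<in> D" "hconv H X x" using assms(4) unfolding hcl_def by blast
  have "hconv H (\<lambda>n. f (X n)) (f x)" using assms(1)[OF X] .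
  moreover have "hconv H (\<lambda>n. f (X n)) (g x)" using assms(2)[OF X] assms(3)[OF X(1)] by simp
  ultimately show ?thesis using hconv_unique by blast
qed

lemma bop_cont_D:
  assumes D: "subsp D" and T: "bop H (hcl H D) T" and X: "\<And>n. X n \<in> D" and c: "hconv H X x"
  shows "hconv H (\<lambda>n. T (X n)) (T x)"
proof -
  have x: "x \<in> hcl H D" using hclI[OF X c] .
  show ?thesis
    using bop_cont[OF csub_subsp[OF hcl_subsp[OF D]] T _ x c] X hcl_sub by blast
qed

lemma bop_eq_dense:
  assumes D: "subsp D" and T: "bop H (hcl H D) T" and S: "bop H (hcl H D) S"
    and e: "\<And>d. d \<in> D \<Longrightarrow> T d = S d"
  shows "T = S"
proof
  fix x
  show "T x = S x"
  proof (cases "x \<in> hcl H D")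
    case True
    show ?thesis
      by (rule dense_eq_vec[OF _ _ e True]) (use bop_cont_D[OF D T] bop_cont_D[OF D S] in blast)+
  next
    case False
    then show ?thesis using bop_out[OF T] bop_out[OF S] by simp
  qed
qed

lemma orth_dense_zero:
  assumes D: "subsp D" and v: "v \<in> hcl H D" and o: "\<And>d. d \<in> D \<Longrightarrow> ip v d = 0"
  shows "v = 0"
proof -
  have "ip v v = (\<lambda>_. 0) v"
    by (rule dense_eq_scalar[OF _ _ o v]) (auto intro: hconv_ip hconv_const)
  thus ?thesis using ip_def0 by simp
qed

lemma ip_dense_eq:
  assumes D: "subsp D" and "v \<in> hcl H D" "w \<in> hcl H D" and o: "\<And>d. d \<in> D \<Longrightarrow> ip v d = ip w d"
  shows "v = w"
proof -
  have "v - w \<in> hcl H D" using assms hcl_subsp[OF D] csub_subsp subsp_diff by blast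
  moreover have "\<And>d. d \<in> D \<Longrightarrow> ip (v - w) d = 0" using o by (simp add: ip_diff1)
  ultimately have "v - w = 0" using orth_dense_zero[OF D] by blast
  thus ?thesis by simp
qed

subsection \<open>Riesz representation and adjoints\<close>

lemma riesz:
  assumes K: "csub K"
    and add: "\<And>x y. x \<in> K \<Longrightarrow> y \<in> K \<Longrightarrow> f (x + y) = f x + f y"
    and hom: "\<And>c x. x \<in> K \<Longrightarrow> f (sc c x) = c * f x"
    and bnd: "\<And>x. x \<in> K \<Longrightarrow> cmod (f x) \<le> C * nm x"
  shows "\<exists>z\<in>K. \<forall>x\<in>K. f x = ip x z"
proof (cases "\<forall>x\<in>K. f x = 0")
  case True
  then show ?thesis using subsp_0[OF csub_subsp[OF K]] by (intro bexI[of _ 0]) auto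
next
  case False
  have S: "subsp K" using K csub_subsp by blast
  then obtain w where w: "w \<in> K" "f w \<noteq> 0" using False by blast
  have fdiff: "f (x - y) = f x - f y" if "x \<in> K" "y \<in> K" for x y
    using add[of "x - y" y] subsp_diff[OF S that] that by simp
  define N where "N = {x\<in>K. f x = 0}"
  have f0: "f 0 = 0" using hom[of 0 0] subsp_0[OF S] by simp
  have N: "csub N"
    unfolding csub_def subsp_def
  proof (intro conjI ballI allI subsetI)
    show "0 \<in> N" unfolding N_def using f0 subsp_0[OF S] by simp
    show "x + y \<in> N" if "x \<in> N" "y \<in> N" for x y using that add subsp_add[OF S] unfolding N_def by auto
    show "sc c x \<in> N" if "x \<in> N" for c x using that hom subsp_sc[OF S] unfolding N_def by auto
    show "x \<in> N" if hx: "x \<in> hcl H N" for x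
    proof -
      obtain X where X: "\<And>n. X n \<in> N" "hconv H X x" using hx unfolding hcl_def by blast
      have XK: "\<And>n. X n \<in> K" using X(1) unfolding N_def by blast
      have xK: "x \<in> K" using csub_closed[OF K XK X(2)] .
      have "cmod (f x) \<le> C * nm (x - X n)" for n
        using bnd[OF subsp_diff[OF S xK XK]] fdiff[OF xK XK] X(1) unfolding N_def by auto
      moreover have "(\<lambda>n. C * nm (x - X n)) \<longlonglongrightarrow> 0"
        using X(2) unfolding hconv_iff by (simp add: nm_diff_sym tendsto_mult_right_zero)
      ultimately have "cmod (f x) \<le> 0"
        using LIMSEQ_le_const[of "\<lambda>n. C * nm (x - X n)" 0 "cmod (f x)"] by auto
      thus ?thesis using xK unfolding N_def by simp
    qed
  qed
  define w0 where "w0 = w - proj N w"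
  have pN: "proj N w \<in> N" using proj_in[OF N] .
  have w0K: "w0 \<in> K" unfolding w0_def using pN w(1) subsp_diff[OF S] unfolding N_def by blast
  have fw0: "f w0 = f w" unfolding w0_def using fdiff[OF w(1)] pN unfolding N_def by simp
  have orth: "\<And>u. u \<in> N \<Longrightarrow> ip u w0 = 0"
    using proj_orth[OF N] ip_conj unfolding w0_def by (metis complex_cnj_zero)
  have w00: "w0 \<noteq> 0" using fw0 w(2) f0 by auto
  have ipw0: "ip w0 w0 \<noteq> 0" using w00 ip_def0 by blast
  define z where "z = sc (cnj (f w0 / ip w0 w0)) w0"
  have "\<forall>x\<in>K. f x = ip x z"
  proof
    fix x assume x: "x \<in> K"
    define u where "u = x - sc (f x / f w0) w0"
    have uK: "u \<in> K" unfolding u_def using x w0K S subsp_diff subsp_sc by blast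
    have "f u = f x - (f x / f w0) * f w0" unfolding u_def
      using fdiff[OF x subsp_sc[OF S w0K]] hom[OF w0K] by simp
    also have "\<dots> = 0" using fw0 w(2) by simp
    finally have "u \<in> N" unfolding N_def using uK by simp
    then have "ip u w0 = 0" by (rule orth)
    then have "ip x w0 = (f x / f w0) * ip w0 w0" unfolding u_def by (simp add: ip_simps)
    then have "f x = ip x w0 * f w0 / ip w0 w0" using ipw0 fw0 w(2) by (simp add: field_simps)
    also have "\<dots> = ip x z" unfolding z_def by (simp add: ip_sc2)
    finally show "f x = ip x z" .
  qed
  moreover have "z \<in> K" unfolding z_def using subsp_sc[OF S w0K] .
  ultimately show ?thesis by blast
qed

lemma rep_unique:
  assumes K: "csub K" and "z \<in> K" "z' \<in> K" and "\<And>x. x \<in> K \<Longrightarrow> ip x z = ip x z'"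
  shows "z = z'"
proof -
  have d: "z - z' \<in> K" using assms subsp_diff csub_subsp by blast
  have "ip (z - z') (z - z') = 0"
    using assms(4)[OF d] by (simp add: ip_diff2)
  thus ?thesis using ip_def0[of "z - z'"] by simp
qed

lemma adj_exists:
  assumes K: "csub K" and T: "bop H K T"
  shows "\<exists>S. bop H K S \<and> (\<forall>x\<in>K. \<forall>y\<in>K. ip (T x) y = ip x (S y))"
proof -
  have S0: "subsp K" using K csub_subsp by blast
  obtain C where C: "C > 0" "\<And>x. x \<in> K \<Longrightarrow> nm (T x) \<le> C * nm x" using bop_bound[OF T] by blast
  have ex: "\<exists>z\<in>K. \<forall>x\<in>K. ip (T x) y = ip x z" if y: "y \<in> K" for y
  proof (rule riesz[OF K])
    show "ip (T (x + x')) y = ip (T x) y + ip (T x') y" if "x \<in> K" "x' \<in> K" for x x'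
      using bop_add[OF T that] by (simp add: ip_add1)
    show "ip (T (sc c x)) y = c * ip (T x) y" if "x \<in> K" for c x
      using bop_sc[OF T that] by (simp add: ip_sc1)
    show "cmod (ip (T x) y) \<le> (C * nm y) * nm x" if "x \<in> K" for x
    proof -
      have "cmod (ip (T x) y) \<le> nm (T x) * nm y" by (rule cauchy_schwarz)
      also have "\<dots> \<le> (C * nm x) * nm y" using C(2)[OF that] by (simp add: mult_right_mono)
      finally show ?thesis by (simp add: algebra_simps)
    qed
  qed
  define S where "S y = (if y \<in> K then (SOME z. z \<in> K \<and> (\<forall>x\<in>K. ip (T x) y = ip x z)) else 0)" for y
  have Sp: "S y \<in> K \<and> (\<forall>x\<in>K. ip (T x) y = ip x (S y))" if "y \<in> K" for y
  proof -
    from ex[OF that] have "\<exists>z. z \<in> K \<and> (\<forall>x\<in>K. ip (T x) y = ip x z)" by blast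
    then have "(SOME z. z \<in> K \<and> (\<forall>x\<in>K. ip (T x) y = ip x z)) \<in> K \<and>
       (\<forall>x\<in>K. ip (T x) y = ip x (SOME z. z \<in> K \<and> (\<forall>x\<in>K. ip (T x) y = ip x z)))"
      by (rule someI_ex)
    then show ?thesis unfolding S_def if_P[OF that] .
  qed
  have "bop H K S"
    unfolding bop_def
  proof (intro conjI ballI allI impI)
    show "S x \<in> K" if "x \<in> K" for x using Sp[OF that] by blast
    show "S x = 0" if "x \<notin> K" for x using that unfolding S_def by simp
    show "S (x + y) = S x + S y" if xy: "x \<in> K" "y \<in> K" for x y
    proof (rule rep_unique[OF K])
      show "S (x + y) \<in> K" using Sp subsp_add[OF S0 xy] by blast
      show "S x + S y \<in> K" using Sp xy subsp_add[OF S0] by blast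
      fix u assume u: "u \<in> K"
      have "ip u (S (x + y)) = ip (T u) (x + y)" using Sp[OF subsp_add[OF S0 xy]] u by simp
      also have "\<dots> = ip (T u) x + ip (T u) y" by (rule ip_add2)
      also have "\<dots> = ip u (S x) + ip u (S y)" using Sp xy u by simp
      also have "\<dots> = ip u (S x + S y)" by (simp add: ip_add2)
      finally show "ip u (S (x + y)) = ip u (S x + S y)" .
    qed
    show "S (sc c x) = sc c (S x)" if x: "x \<in> K" for c x
    proof (rule rep_unique[OF K])
      show "S (sc c x) \<in> K" using Sp subsp_sc[OF S0 x] by blast
      show "sc c (S x) \<in> K" using Sp x subsp_sc[OF S0] by blast
      fix u assume u: "u \<in> K"
      have "ip u (S (sc c x)) = ip (T u) (sc c x)" using Sp[OF subsp_sc[OF S0 x]] u by simp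
      also have "\<dots> = cnj c * ip (T u) x" by (rule ip_sc2)
      also have "\<dots> = cnj c * ip u (S x)" using Sp x u by simp
      also have "\<dots> = ip u (sc c (S x))" by (simp add: ip_sc2)
      finally show "ip u (S (sc c x)) = ip u (sc c (S x))" .
    qed
    show "\<exists>C. \<forall>x\<in>K. nm (S x) \<le> C * nm x"
    proof (intro exI ballI)
      fix y assume y: "y \<in> K"
      have "(nm (S y))^2 = Re (ip (S y) (S y))" by (rule nm_sq)
      also have "ip (S y) (S y) = cnj (ip (T (S y)) y)"
        using Sp[OF y] ip_conj[of "S y" "S y"] by auto
      also have "Re (cnj (ip (T (S y)) y)) \<le> cmod (ip (T (S y)) y)"
        using complex_Re_le_cmod by simp
      also have "\<dots> \<le> nm (T (S y)) * nm y" by (rule cauchy_schwarz)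
      also have "\<dots> \<le> (C * nm (S y)) * nm y" using C(2) Sp[OF y] by (simp add: mult_right_mono)
      finally have "(nm (S y))^2 \<le> (C * nm y) * nm (S y)" by (simp add: algebra_simps)
      then show "nm (S y) \<le> C * nm y"
      proof (cases "nm (S y) = 0")
        case True then show ?thesis using C(1) by simp
      next
        case False
        then have "nm (S y) > 0" using nm_ge0 by (simp add: less_le)
        moreover assume "(nm (S y))^2 \<le> (C * nm y) * nm (S y)"
        ultimately show ?thesis by (simp add: power2_eq_square mult_right_le_imp_le)
      qed
    qed
  qed
  thus ?thesis using Sp by blast
qed

lemma adj_unique:
  assumes K: "csub K"
    and S1: "bop H K S1" "\<forall>x\<in>K. \<forall>y\<in>K. ip (T x) y = ip x (S1 y)"
    and S2: "bop H K S2" "\<forall>x\<in>K. \<forall>y\<in>K. ip (T x) y = ip x (S2 y)"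
  shows "S1 = S2"
proof
  fix y show "S1 y = S2 y"
  proof (cases "y \<in> K")
    case True
    show ?thesis by (rule rep_unique[OF K]) (use S1 S2 True bop_in in auto)
  next
    case False then show ?thesis using bop_out S1 S2 by metis
  qed
qed

lemma adj_char:
  assumes K: "csub K" and T: "bop H K T"
  shows "bop H K (adj H K T) \<and> (\<forall>x\<in>K. \<forall>y\<in>K. ip (T x) y = ip x (adj H K T y))"
proof -
  obtain S where S: "bop H K S \<and> (\<forall>x\<in>K. \<forall>y\<in>K. ip (T x) y = ip x (S y))"
    using adj_exists[OF K T] by blast
  show ?thesis unfolding adj_def
    by (rule theI[where P="\<lambda>S. bop H K S \<and> (\<forall>x\<in>K. \<forall>y\<in>K. ip (T x) y = ip x (S y))", OF S])
       (use adj_unique[OF K] S in blast)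
qed

lemma adj_bop: "csub K \<Longrightarrow> bop H K T \<Longrightarrow> bop H K (adj H K T)" using adj_char by blast
lemma adj_ip: "csub K \<Longrightarrow> bop H K T \<Longrightarrow> x \<in> K \<Longrightarrow> y \<in> K \<Longrightarrow> ip (T x) y = ip x (adj H K T y)"
  using adj_char by blast
lemma adj_ip2: "csub K \<Longrightarrow> bop H K T \<Longrightarrow> x \<in> K \<Longrightarrow> y \<in> K \<Longrightarrow> ip (adj H K T x) y = ip x (T y)"
  using adj_ip[of K T y x] ip_conj by metis

lemma adj_eqI:
  "csub K \<Longrightarrow> bop H K T \<Longrightarrow> bop H K S \<Longrightarrow> (\<And>x y. x \<in> K \<Longrightarrow> y \<in> K \<Longrightarrow> ip (T x) y = ip x (S y)) \<Longrightarrow> adj H K T = S"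
  using adj_unique[of K "adj H K T" T S] adj_char[of K T] by blast


lemma extend:
  fixes f :: "'h \<Rightarrow> 'h" and \<sigma> :: "complex \<Rightarrow> complex"
  assumes D: "subsp D" and Kc: "hcl H K' \<subseteq> K'"
    and add: "\<And>x y. x \<in> D \<Longrightarrow> y \<in> D \<Longrightarrow> f (x + y) = f x + f y"
    and hom: "\<And>c x. x \<in> D \<Longrightarrow> f (sc c x) = sc (\<sigma> c) (f x)"
    and bnd: "\<And>x. x \<in> D \<Longrightarrow> nm (f x) \<le> C * nm x"
    and rng: "\<And>x. x \<in> D \<Longrightarrow> f x \<in> K'"
  shows "\<exists>T. (\<forall>x\<in>D. T x = f x) \<and> (\<forall>x. x \<notin> hcl H D \<longrightarrow> T x = 0)
     \<and> (\<forall>x\<in>hcl H D. \<forall>y\<in>hcl H D. T (x + y) = T x + T y)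
     \<and> (\<forall>c. \<forall>x\<in>hcl H D. T (sc c x) = sc (\<sigma> c) (T x))
     \<and> (\<forall>x\<in>hcl H D. nm (T x) \<le> C * nm x) \<and> (\<forall>x\<in>hcl H D. T x \<in> K')
     \<and> (\<forall>X x. (\<forall>n. X n \<in> D) \<longrightarrow> hconv H X x \<longrightarrow> hconv H (\<lambda>n. f (X n)) (T x))"
proof -
  have fdiff: "f (x - y) = f x - f y" if "x \<in> D" "y \<in> D" for x y
    using add[of "x - y" y] subsp_diff[OF D that] that by (simp add: eq_diff_eq)
  define C' where "C' = \<bar>C\<bar> + 1"
  have C'pos: "C' > 0" unfolding C'_def by simp
  have bnd': "nm (f x) \<le> C' * nm x" if "x \<in> D" for x
  proof -
    have "nm (f x) \<le> C * nm x" by (rule bnd[OF that])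
    also have "\<dots> \<le> C' * nm x" unfolding C'_def by (rule mult_right_mono) simp_all
    finally show ?thesis .
  qed
  have key1: "\<exists>l. hconv H (\<lambda>n. f (X n)) l" if X: "\<And>n. X n \<in> D" "hconv H X x" for X x
  proof -
    have "hcauchy H (\<lambda>n. f (X n))"
      unfolding hcauchy_def
    proof (intro allI impI)
      fix e :: real assume e: "e > 0"
      then have "e / C' > 0" using C'pos by simp
      then obtain N where N: "\<forall>m\<ge>N. \<forall>n\<ge>N. nm (X m - X n) < e / C'"
        using hconv_cauchy[OF X(2)] unfolding hcauchy_def by blast
      show "\<exists>N. \<forall>m\<ge>N. \<forall>n\<ge>N. nm (f (X m) - f (X n)) < e"
      proof (intro exI allI impI)
        fix m n assume "m \<ge> N" "n \<ge> N"
        then have lt: "nm (X m - X n) < e / C'" using N by blast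
        have "nm (f (X m) - f (X n)) = nm (f (X m - X n))" using fdiff X(1) by simp
        also have "\<dots> \<le> C' * nm (X m - X n)" using bnd' subsp_diff[OF D X(1) X(1)] by blast
        also have "\<dots> < C' * (e / C')" using mult_strict_left_mono[OF lt C'pos] .
        also have "\<dots> = e" using C'pos by simp
        finally show "nm (f (X m) - f (X n)) < e" .
      qed
    qed
    thus ?thesis using complete by blast
  qed
  have key2: "l = l'" if X: "\<And>n. X n \<in> D" "hconv H X x" and Y: "\<And>n. Y n \<in> D" "hconv H Y x"
    and l: "hconv H (\<lambda>n. f (X n)) l" and l': "hconv H (\<lambda>n. f (Y n)) l'" for X Y x l l'
  proof -
    have "hconv H (\<lambda>n. f (X n) - f (Y n)) 0"
    proof (rule hconv_le)
      show "nm (f (X n) - f (Y n) - 0) \<le> C' * nm (X n - Y n)" for n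
        using fdiff[OF X(1) Y(1)] bnd'[OF subsp_diff[OF D X(1) Y(1)]] by simp
      have "hconv H (\<lambda>n. X n - Y n) (x - x)" by (rule hconv_diff[OF X(2) Y(2)])
      then show "(\<lambda>n. C' * nm (X n - Y n)) \<longlonglongrightarrow> 0"
        unfolding hconv_iff by (simp add: tendsto_mult_right_zero)
    qed
    moreover have "hconv H (\<lambda>n. f (X n) - f (Y n)) (l - l')" by (rule hconv_diff[OF l l'])
    ultimately have "l - l' = 0" using hconv_unique by blast
    thus ?thesis by simp
  qed
  define L where "L x = (THE l. \<exists>X. (\<forall>n. X n \<in> D) \<and> hconv H X x \<and> hconv H (\<lambda>n. f (X n)) l)" for x
  define T where "T x = (if x \<in> hcl H D then L x else 0)" for x
  have key3: "hconv H (\<lambda>n. f (X n)) (T x)" if X: "\<And>n. X n \<in> D" "hconv H X x" for X x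
  proof -
    have xD: "x \<in> hcl H D" using hclI[OF X] .
    obtain l where l: "hconv H (\<lambda>n. f (X n)) l" using key1[OF X] by blast
    have P: "\<exists>X'. (\<forall>n. X' n \<in> D) \<and> hconv H X' x \<and> hconv H (\<lambda>n. f (X' n)) l"
      using X l by blast
    have "L x = l" unfolding L_def
    proof (rule the_equality)
      show "\<exists>X'. (\<forall>n. X' n \<in> D) \<and> hconv H X' x \<and> hconv H (\<lambda>n. f (X' n)) l" using P .
      fix l' assume "\<exists>X'. (\<forall>n. X' n \<in> D) \<and> hconv H X' x \<and> hconv H (\<lambda>n. f (X' n)) l'"
      then obtain X' where "\<forall>n. X' n \<in> D" "hconv H X' x" "hconv H (\<lambda>n. f (X' n)) l'" by blast
      then show "l' = l" using key2[OF _ _ X _ l] by blast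
    qed
    thus ?thesis using l xD unfolding T_def by simp
  qed
  have TD: "T x = f x" if "x \<in> D" for x
    using key3[of "\<lambda>n. x" x] hconv_const[of "f x"] hconv_const[of x] that hconv_unique by blast
  have seqE: "\<exists>X. (\<forall>n. X n \<in> D) \<and> hconv H X x" if "x \<in> hcl H D" for x
    using that unfolding hcl_def by blast
  have Tadd: "T (x + y) = T x + T y" if hxy: "x \<in> hcl H D" "y \<in> hcl H D" for x y
  proof -
    obtain X where X: "\<forall>n. X n \<in> D" "hconv H X x" using seqE[OF hxy(1)] by blast
    obtain Y where Y: "\<forall>n. Y n \<in> D" "hconv H Y y" using seqE[OF hxy(2)] by blast
    have XY: "\<And>n. X n + Y n \<in> D" using X Y subsp_add[OF D] by blast
    have "hconv H (\<lambda>n. f (X n + Y n)) (T (x + y))" using key3[OF XY hconv_add[OF X(2) Y(2)]] .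
    moreover have "hconv H (\<lambda>n. f (X n + Y n)) (T x + T y)"
      using hconv_add[OF key3[of X x] key3[of Y y]] X Y add by simp
    ultimately show ?thesis using hconv_unique by blast
  qed
  have Tsc: "T (sc c x) = sc (\<sigma> c) (T x)" if hx: "x \<in> hcl H D" for c x
  proof -
    obtain X where X: "\<forall>n. X n \<in> D" "hconv H X x" using seqE[OF hx] by blast
    have XY: "\<And>n. sc c (X n) \<in> D" using X subsp_sc[OF D] by blast
    have "hconv H (\<lambda>n. f (sc c (X n))) (T (sc c x))" using key3[OF XY hconv_sc[OF X(2)]] .
    moreover have "hconv H (\<lambda>n. f (sc c (X n))) (sc (\<sigma> c) (T x))"
      using hconv_sc[OF key3[of X x]] X hom by simp
    ultimately show ?thesis using hconv_unique by blast
  qed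
  have Tbnd: "nm (T x) \<le> C * nm x" if hx: "x \<in> hcl H D" for x
  proof -
    obtain X where X: "\<forall>n. X n \<in> D" "hconv H X x" using seqE[OF hx] by blast
    have l1: "(\<lambda>n. nm (f (X n))) \<longlonglongrightarrow> nm (T x)" using hconv_nm[OF key3[of X x]] X by simp
    have l2: "(\<lambda>n. C * nm (X n)) \<longlonglongrightarrow> C * nm x" using hconv_nm[OF X(2)] by (intro tendsto_intros)
    show ?thesis using LIMSEQ_le[OF l1 l2] bnd X(1) by blast
  qed
  have Trng: "T x \<in> K'" if hx: "x \<in> hcl H D" for x
  proof -
    obtain X where X: "\<forall>n. X n \<in> D" "hconv H X x" using seqE[OF hx] by blast
    have "T x \<in> hcl H K'" using hclI[of "\<lambda>n. f (X n)" K' "T x"] key3[of X x] X rng by blast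
    thus ?thesis using Kc by blast
  qed
  have "\<forall>x. x \<notin> hcl H D \<longrightarrow> T x = 0" unfolding T_def by simp
  then show ?thesis using TD Tadd Tsc Tbnd Trng key3 by blast
qed

lemma extend_bop:
  assumes D: "subsp D"
    and add: "\<And>x y. x \<in> D \<Longrightarrow> y \<in> D \<Longrightarrow> f (x + y) = f x + f y"
    and hom: "\<And>c x. x \<in> D \<Longrightarrow> f (sc c x) = sc c (f x)"
    and bnd: "\<And>x. x \<in> D \<Longrightarrow> nm (f x) \<le> C * nm x"
    and rng: "\<And>x. x \<in> D \<Longrightarrow> f x \<in> hcl H D"
  shows "\<exists>T. bop H (hcl H D) T \<and> (\<forall>x\<in>D. T x = f x)"
proof -
  obtain T where T: "(\<forall>x\<in>D. T x = f x) \<and> (\<forall>x. x \<notin> hcl H D \<longrightarrow> T x = 0)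
     \<and> (\<forall>x\<in>hcl H D. \<forall>y\<in>hcl H D. T (x + y) = T x + T y)
     \<and> (\<forall>c. \<forall>x\<in>hcl H D. T (sc c x) = sc c (T x))
     \<and> (\<forall>x\<in>hcl H D. nm (T x) \<le> C * nm x) \<and> (\<forall>x\<in>hcl H D. T x \<in> hcl H D)"
    using extend[where \<sigma>="\<lambda>c. c" and K'="hcl H D", OF D hcl_idem add hom bnd rng] by blast
  then have "bop H (hcl H D) T" unfolding bop_def by blast
  thus ?thesis using T by blast
qed

end

locale alg = hs H for H :: "('h::ab_group_add) hsp" +
  fixes P :: "('a::ring_1) pvn" and G :: "'a \<Rightarrow> 'h"
  assumes fin: "fin_pvn P" and emb: "emb P H G" and dense: "hcl H (range G) = UNIV"
begin

abbreviation as where "as \<equiv> asc P"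
abbreviation st where "st \<equiv> ast P"
abbreviation tr where "tr \<equiv> atr P"

lemma SA: "star_alg P" using fin unfolding fin_pvn_def by blast

lemma as_add0: "\<forall>c a b. as c (a + b) = as c a + as c b" using SA unfolding star_alg_def by (elim conjE) assumption
lemma as_add2_0: "\<forall>c d a. as (c + d) a = as c a + as d a" using SA unfolding star_alg_def by (elim conjE) assumption
lemma as_mult0: "\<forall>c d a. as (c * d) a = as c (as d a)" using SA unfolding star_alg_def by (elim conjE) assumption
lemma as_one0: "\<forall>a. as 1 a = a" using SA unfolding star_alg_def by (elim conjE) assumption
lemma as_m1_0: "\<forall>c a b. as c (a * b) = as c a * b" using SA unfolding star_alg_def by (elim conjE) assumption
lemma as_m2_0: "\<forall>c a b. as c (a * b) = a * as c b" using SA unfolding star_alg_def by (elim conjE) assumption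
lemma st_add0: "\<forall>a b. st (a + b) = st a + st b" using SA unfolding star_alg_def by (elim conjE) assumption
lemma st_as0: "\<forall>c a. st (as c a) = as (cnj c) (st a)" using SA unfolding star_alg_def by (elim conjE) assumption
lemma st_mul0: "\<forall>a b. st (a * b) = st b * st a" using SA unfolding star_alg_def by (elim conjE) assumption
lemma st_st0: "\<forall>a. st (st a) = a" using SA unfolding star_alg_def by (elim conjE) assumption

lemma as_add: "as c (a + b) = as c a + as c b" using as_add0 by blast
lemma as_add2: "as (c + d) a = as c a + as d a" using as_add2_0 by blast
lemma as_mult: "as (c * d) a = as c (as d a)" using as_mult0 by blast
lemma as_one[simp]: "as 1 a = a" using as_one0 by blast
lemma as_m1: "as c (a * b) = as c a * b" using as_m1_0 by blast
lemma as_m2: "as c (a * b) = a * as c b" using as_m2_0 by blast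
lemma st_add: "st (a + b) = st a + st b" using st_add0 by blast
lemma st_as: "st (as c a) = as (cnj c) (st a)" using st_as0 by blast
lemma st_mul: "st (a * b) = st b * st a" using st_mul0 by blast
lemma st_st[simp]: "st (st a) = a" using st_st0 by blast

lemma tr_add0: "\<forall>a b. tr (a + b) = tr a + tr b" using fin unfolding fin_pvn_def by (elim conjE) assumption
lemma tr_as0: "\<forall>c a. tr (as c a) = c * tr a" using fin unfolding fin_pvn_def by (elim conjE) assumption
lemma tr_one: "tr 1 = 1" using fin unfolding fin_pvn_def by (elim conjE) assumption
lemma tr_comm0: "\<forall>a b. tr (a * b) = tr (b * a)" using fin unfolding fin_pvn_def by (elim conjE) assumption
lemma tr_faith0: "\<forall>a. tr (st a * a) = 0 \<longrightarrow> a = 0" using fin unfolding fin_pvn_def by (elim conjE) assumption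
lemma lbound0: "\<forall>a. \<exists>C. \<forall>b. Re (tr (st (a * b) * (a * b))) \<le> C * Re (tr (st b * b))"
  using fin unfolding fin_pvn_def by (elim conjE) assumption

lemma tr_add: "tr (a + b) = tr a + tr b" using tr_add0 by blast
lemma tr_as: "tr (as c a) = c * tr a" using tr_as0 by blast
lemma tr_comm: "tr (a * b) = tr (b * a)" using tr_comm0 by blast
lemma tr_faith: "tr (st a * a) = 0 \<Longrightarrow> a = 0" using tr_faith0 by blast
lemma lbound: "\<exists>C. \<forall>b. Re (tr (st (a * b) * (a * b))) \<le> C * Re (tr (st b * b))" using lbound0 by blast

lemma G_add0: "\<forall>a b. G (a + b) = G a + G b" using emb unfolding emb_def by (elim conjE) assumption
lemma G_as0: "\<forall>c a. G (as c a) = sc c (G a)" using emb unfolding emb_def by (elim conjE) assumption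
lemma G_ip0: "\<forall>a b. ip (G a) (G b) = tr (st b * a)" using emb unfolding emb_def by (elim conjE) assumption
lemma G_add: "G (a + b) = G a + G b" using G_add0 by blast
lemma G_as: "G (as c a) = sc c (G a)" using G_as0 by blast
lemma G_ip: "ip (G a) (G b) = tr (st b * a)" using G_ip0 by blast

lemma as_zero[simp]: "as 0 a = 0"
  using as_add2[of 0 0 a] by simp
lemma as_0[simp]: "as c 0 = 0"
  using as_add[of c 0 0] by simp
lemma as_neg1: "as (-1) a = - a"
  using as_add2[of 1 "-1" a] minus_unique[of a "as (-1) a"] by simp
lemma st_0[simp]: "st 0 = 0" using st_add[of 0 0] by simp
lemma st_neg: "st (- a) = - st a" using st_add[of a "-a"] minus_unique[of "st a" "st (-a)"] by simp
lemma st_diff: "st (a - b) = st a - st b" using st_add[of a "-b"] st_neg by simp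
lemma st_one[simp]: "st 1 = 1"
proof -
  have "st (st 1 * 1) = st 1 * st (st 1)" by (rule st_mul)
  then show ?thesis by simp
qed
lemma tr_0[simp]: "tr 0 = 0" using tr_add[of 0 0] by simp
lemma tr_neg: "tr (- a) = - tr a" using tr_add[of a "-a"] minus_unique[of "tr a" "tr (-a)"] by simp
lemma tr_diff: "tr (a - b) = tr a - tr b" using tr_add[of a "-b"] tr_neg by simp
lemma G_0[simp]: "G 0 = 0" using G_add[of 0 0] by simp
lemma G_neg: "G (- a) = - G a" using G_add[of a "-a"] minus_unique[of "G a" "G (-a)"] by simp
lemma G_diff: "G (a - b) = G a - G b" using G_add[of a "-b"] G_neg by simp

lemma G_inj: "G a = G b \<Longrightarrow> a = b"
proof -
  assume "G a = G b"
  then have "G (a - b) = 0" by (simp add: G_diff)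
  then have "tr (st (a - b) * (a - b)) = 0" using G_ip[of "a - b" "a - b"] by simp
  then show "a = b" using tr_faith[of "a - b"] by simp
qed

lemma nm_G_sq: "(nm (G a))^2 = Re (tr (st a * a))" using nm_sq G_ip by simp

lemma sa_1: "subalg P A \<Longrightarrow> 1 \<in> A" unfolding subalg_def by blast
lemma sa_add: "subalg P A \<Longrightarrow> a \<in> A \<Longrightarrow> b \<in> A \<Longrightarrow> a + b \<in> A" unfolding subalg_def by blast
lemma sa_mul: "subalg P A \<Longrightarrow> a \<in> A \<Longrightarrow> b \<in> A \<Longrightarrow> a * b \<in> A" unfolding subalg_def by blast
lemma sa_as: "subalg P A \<Longrightarrow> a \<in> A \<Longrightarrow> as c a \<in> A" unfolding subalg_def by blast
lemma sa_st: "subalg P A \<Longrightarrow> a \<in> A \<Longrightarrow> st a \<in> A" unfolding subalg_def by blast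
lemma sa_0: "subalg P A \<Longrightarrow> 0 \<in> A" using sa_as[of A 1 0] sa_1 by simp
lemma sa_neg: "subalg P A \<Longrightarrow> a \<in> A \<Longrightarrow> - a \<in> A" using sa_as[of A a "-1"] as_neg1 by simp
lemma sa_diff: "subalg P A \<Longrightarrow> a \<in> A \<Longrightarrow> b \<in> A \<Longrightarrow> a - b \<in> A"
  using sa_add[of A a "-b"] sa_neg by simp
lemma sa_UNIV: "subalg P UNIV" unfolding subalg_def by simp

lemma GA_subsp: assumes A: "subalg P A" shows "subsp (G ` A)"
  unfolding subsp_def
proof (intro conjI ballI allI)
  show "0 \<in> G ` A" using sa_0[OF A] G_0 by (metis image_eqI)
  show "x + y \<in> G ` A" if "x \<in> G ` A" "y \<in> G ` A" for x y
    using that sa_add[OF A] G_add by (auto simp: image_iff) (metis G_add)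
  show "sc c x \<in> G ` A" if "x \<in> G ` A" for c x
    using that sa_as[OF A] by (auto simp: image_iff) (metis G_as)
qed

abbreviation HH where "HH A \<equiv> HA H G A"

lemma HA_csub: "subalg P A \<Longrightarrow> csub (HH A)"
  unfolding HA_def using hcl_subsp GA_subsp by blast
lemma HA_subsp: "subalg P A \<Longrightarrow> subsp (HH A)"
  using HA_csub csub_subsp by blast
lemma HA_UNIV[simp]: "HH UNIV = UNIV" unfolding HA_def using dense by simp
lemma HA_G: "a \<in> A \<Longrightarrow> G a \<in> HH A" unfolding HA_def using hcl_sub by blast
lemma HA_mono: "A \<subseteq> B \<Longrightarrow> HH A \<subseteq> HH B" unfolding HA_def by (intro hcl_mono) blast

abbreviation Om where "Om \<equiv> G 1"

lemma Om_HA: "subalg P A \<Longrightarrow> Om \<in> HH A" using HA_G sa_1 by blast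

definition Ginv :: "'h \<Rightarrow> 'a" where "Ginv v = (SOME a. G a = v)"
lemma Ginv_G[simp]: "Ginv (G a) = a"
  unfolding Ginv_def by (rule some_equality) (auto intro: G_inj)

lemma op_exists:
  assumes A: "subalg P A" and gA: "\<And>b. b \<in> A \<Longrightarrow> g b \<in> A"
    and gadd: "\<And>a b. a \<in> A \<Longrightarrow> b \<in> A \<Longrightarrow> g (a + b) = g a + g b"
    and gsc: "\<And>c b. b \<in> A \<Longrightarrow> g (as c b) = as c (g b)"
    and gb: "\<And>b. b \<in> A \<Longrightarrow> nm (G (g b)) \<le> C * nm (G b)"
  shows "\<exists>T. bop H (HH A) T \<and> (\<forall>b\<in>A. T (G b) = G (g b))"
proof -
  define f where "f v = G (g (Ginv v))" for v
  have "\<exists>T. bop H (hcl H (G ` A)) T \<and> (\<forall>x\<in>G ` A. T x = f x)"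
  proof (rule extend_bop[OF GA_subsp[OF A]])
    show "f (x + y) = f x + f y" if "x \<in> G ` A" "y \<in> G ` A" for x y
      using that unfolding f_def by (auto simp: G_add[symmetric] gadd sa_add[OF A])
    show "f (sc c x) = sc c (f x)" if "x \<in> G ` A" for c x
      using that unfolding f_def by (auto simp: G_as[symmetric] gsc)
    show "nm (f x) \<le> C * nm x" if "x \<in> G ` A" for x
      using that unfolding f_def by (auto simp: gb)
    show "f x \<in> hcl H (G ` A)" if "x \<in> G ` A" for x
      using that unfolding f_def using gA hcl_sub by fastforce
  qed
  then show ?thesis unfolding HA_def f_def by auto
qed

lemma op_unique:
  assumes A: "subalg P A" and "bop H (HH A) T" "bop H (HH A) S" "\<And>b. b \<in> A \<Longrightarrow> T (G b) = S (G b)"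
  shows "T = S"
  using bop_eq_dense[OF GA_subsp[OF A]] assms unfolding HA_def by blast

lemma op_the:
  assumes A: "subalg P A" and ex: "\<exists>T. bop H (HH A) T \<and> (\<forall>b\<in>A. T (G b) = G (g b))"
  shows "bop H (HH A) (THE T. bop H (HH A) T \<and> (\<forall>b\<in>A. T (G b) = G (g b))) \<and>
    (\<forall>b\<in>A. (THE T. bop H (HH A) T \<and> (\<forall>b\<in>A. T (G b) = G (g b))) (G b) = G (g b))"
proof -
  obtain T where T: "bop H (HH A) T \<and> (\<forall>b\<in>A. T (G b) = G (g b))" using ex by blast
  show ?thesis
    by (rule theI[where P="\<lambda>T. bop H (HH A) T \<and> (\<forall>b\<in>A. T (G b) = G (g b))", OF T])
       (use op_unique[OF A] T in auto)
qed

lemma lbound_nm: "\<exists>C. \<forall>b. nm (G (a * b)) \<le> C * nm (G b)"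
proof -
  obtain C where C: "\<forall>b. Re (tr (st (a * b) * (a * b))) \<le> C * Re (tr (st b * b))" using lbound by blast
  have "nm (G (a * b)) \<le> sqrt \<bar>C\<bar> * nm (G b)" for b
  proof -
    have "(nm (G (a * b)))^2 \<le> \<bar>C\<bar> * (nm (G b))^2"
    proof -
      have "(nm (G (a * b)))^2 \<le> C * (nm (G b))^2" using C nm_G_sq by simp
      also have "\<dots> \<le> \<bar>C\<bar> * (nm (G b))^2" by (rule mult_right_mono) simp_all
      finally show ?thesis .
    qed
    then have "sqrt ((nm (G (a * b)))^2) \<le> sqrt (\<bar>C\<bar> * (nm (G b))^2)" by (rule real_sqrt_le_mono)
    thus ?thesis by (simp add: real_sqrt_mult)
  qed
  thus ?thesis by blast
qed

lemma tr_cyc: "tr (st a * st b * b * a) = tr (b * a * st a * st b)"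
proof -
  have "tr (st a * st b * b * a) = tr (st a * (st b * b * a))" by (simp add: mult.assoc)
  also have "\<dots> = tr ((st b * b * a) * st a)" by (rule tr_comm)
  also have "\<dots> = tr (st b * (b * a * st a))" by (simp add: mult.assoc)
  also have "\<dots> = tr ((b * a * st a) * st b)" by (rule tr_comm)
  finally show ?thesis by (simp add: mult.assoc)
qed

lemma rbound_nm: "\<exists>C. \<forall>b. nm (G (b * a)) \<le> C * nm (G b)"
proof -
  obtain C where C: "\<forall>b. nm (G (st a * b)) \<le> C * nm (G b)" using lbound_nm by blast
  have "nm (G (b * a)) \<le> C * nm (G b)" for b
  proof -
    have "(nm (G (b * a)))^2 = (nm (G (st a * st b)))^2"
      using tr_cyc[of a b] by (simp add: nm_G_sq st_mul mult.assoc)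
    then have e1: "nm (G (b * a)) = nm (G (st a * st b))" by (simp add: power2_eq_iff_nonneg)
    have "(nm (G (st b)))^2 = (nm (G b))^2"
      using tr_comm[of b "st b"] by (simp add: nm_G_sq)
    then have e2: "nm (G (st b)) = nm (G b)" by (simp add: power2_eq_iff_nonneg)
    show ?thesis using C e1 e2 by metis
  qed
  thus ?thesis by blast
qed

definition rho :: "'a set \<Rightarrow> 'a \<Rightarrow> 'h \<Rightarrow> 'h" where
  "rho A a = (THE T. bop H (HA H G A) T \<and> (\<forall>b\<in>A. T (G b) = G (b * a)))"

lemma lam_char:
  assumes A: "subalg P A" and a: "a \<in> A"
  shows "bop H (HH A) (lam H G A a) \<and> (\<forall>b\<in>A. lam H G A a (G b) = G (a * b))"
proof -
  obtain C where C: "\<forall>b. nm (G (a * b)) \<le> C * nm (G b)" using lbound_nm by blast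
  have "\<exists>T. bop H (HH A) T \<and> (\<forall>b\<in>A. T (G b) = G (a * b))"
    by (rule op_exists[OF A]) (use C a in \<open>auto simp: sa_mul[OF A] distrib_left as_m2\<close>)
  from op_the[OF A this] show ?thesis unfolding lam_def .
qed

lemma rho_char:
  assumes A: "subalg P A" and a: "a \<in> A"
  shows "bop H (HH A) (rho A a) \<and> (\<forall>b\<in>A. rho A a (G b) = G (b * a))"
proof -
  obtain C where C: "\<forall>b. nm (G (b * a)) \<le> C * nm (G b)" using rbound_nm by blast
  have "\<exists>T. bop H (HH A) T \<and> (\<forall>b\<in>A. T (G b) = G (b * a))"
    by (rule op_exists[OF A]) (use C a in \<open>auto simp: sa_mul[OF A] distrib_right as_m1\<close>)
  from op_the[OF A this] show ?thesis unfolding rho_def .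
qed

lemma lam_bop: "subalg P A \<Longrightarrow> a \<in> A \<Longrightarrow> bop H (HH A) (lam H G A a)" using lam_char by blast
lemma lam_G: "subalg P A \<Longrightarrow> a \<in> A \<Longrightarrow> b \<in> A \<Longrightarrow> lam H G A a (G b) = G (a * b)" using lam_char by blast
lemma rho_bop: "subalg P A \<Longrightarrow> a \<in> A \<Longrightarrow> bop H (HH A) (rho A a)" using rho_char by blast
lemma rho_G: "subalg P A \<Longrightarrow> a \<in> A \<Longrightarrow> b \<in> A \<Longrightarrow> rho A a (G b) = G (b * a)" using rho_char by blast

abbreviation L where "L a \<equiv> lam H G UNIV a"
abbreviation R where "R a \<equiv> rho UNIV a"

lemma L_bop: "bop H UNIV (L a)" using lam_bop[OF sa_UNIV] by simp
lemma R_bop: "bop H UNIV (R a)" using rho_bop[OF sa_UNIV] by simp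
lemma L_G: "L a (G b) = G (a * b)" using lam_G[OF sa_UNIV] by simp
lemma R_G: "R a (G b) = G (b * a)" using rho_G[OF sa_UNIV] by simp
lemma L_Om: "L a Om = G a" using L_G[of a 1] by simp
lemma R_Om: "R a Om = G a" using R_G[of a 1] by simp

lemma UNIV_subsp: "subsp UNIV" using UNIV_csub csub_subsp by blast

lemma cont_UNIV: "bop H UNIV T \<Longrightarrow> hconv H X x \<Longrightarrow> hconv H (\<lambda>n. T (X n)) (T x)"
  using bop_cont[OF UNIV_subsp] by blast

lemma dense_G: "x \<in> hcl H (range G)" using dense by simp

lemma GU_subsp: "subsp (range G)" using GA_subsp[OF sa_UNIV] by simp

lemma bop_UNIV_eq: "bop H UNIV T \<Longrightarrow> bop H UNIV S \<Longrightarrow> (\<And>b. T (G b) = S (G b)) \<Longrightarrow> T = S"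
  using op_unique[OF sa_UNIV] by simp

lemma restrict_eq:
  assumes A: "subalg P A" and T: "bop H (HH A) T" and S: "bop H UNIV S"
    and e: "\<And>b. b \<in> A \<Longrightarrow> T (G b) = S (G b)" and v: "v \<in> HH A"
  shows "T v = S v"
proof (rule dense_eq_vec[of "G ` A" T S])
  show "hconv H (\<lambda>n. T (X n)) (T x)" if "\<And>n. X n \<in> G ` A" "hconv H X x" for X x
    using bop_cont_D[OF GA_subsp[OF A] T[unfolded HA_def]] that by blast
  show "hconv H (\<lambda>n. S (X n)) (S x)" if "\<And>n. X n \<in> G ` A" "hconv H X x" for X x
    using cont_UNIV[OF S] that by blast
  show "T d = S d" if "d \<in> G ` A" for d using that e by auto
  show "v \<in> hcl H (G ` A)" using v unfolding HA_def .
qed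

lemma lam_restrict: "subalg P A \<Longrightarrow> a \<in> A \<Longrightarrow> v \<in> HH A \<Longrightarrow> lam H G A a v = L a v"
  by (rule restrict_eq[OF _ lam_bop L_bop]) (auto simp: lam_G L_G)
lemma rho_restrict: "subalg P A \<Longrightarrow> a \<in> A \<Longrightarrow> v \<in> HH A \<Longrightarrow> rho A a v = R a v"
  by (rule restrict_eq[OF _ rho_bop R_bop]) (auto simp: rho_G R_G)

lemma L_HA: "subalg P A \<Longrightarrow> a \<in> A \<Longrightarrow> v \<in> HH A \<Longrightarrow> L a v \<in> HH A"
  using lam_restrict lam_bop bop_in by metis
lemma R_HA: "subalg P A \<Longrightarrow> a \<in> A \<Longrightarrow> v \<in> HH A \<Longrightarrow> R a v \<in> HH A"
  using rho_restrict rho_bop bop_in by metis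

lemma dense2:
  fixes F1 F2 :: "'h \<Rightarrow> 'h \<Rightarrow> complex"
  assumes c11: "\<And>X x y. hconv H X x \<Longrightarrow> (\<lambda>n. F1 (X n) y) \<longlonglongrightarrow> F1 x y"
    and c12: "\<And>Y x y. hconv H Y y \<Longrightarrow> (\<lambda>n. F1 x (Y n)) \<longlonglongrightarrow> F1 x y"
    and c21: "\<And>X x y. hconv H X x \<Longrightarrow> (\<lambda>n. F2 (X n) y) \<longlonglongrightarrow> F2 x y"
    and c22: "\<And>Y x y. hconv H Y y \<Longrightarrow> (\<lambda>n. F2 x (Y n)) \<longlonglongrightarrow> F2 x y"
    and e: "\<And>p q. F1 (G p) (G q) = F2 (G p) (G q)"
  shows "F1 x y = F2 x y"
proof -
  have s1: "F1 u (G q) = F2 u (G q)" for u q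
    by (rule dense_eq_scalar[of "range G" "\<lambda>u. F1 u (G q)" "\<lambda>u. F2 u (G q)"])
       (use c11 c21 e dense_G in auto)
  show ?thesis
    by (rule dense_eq_scalar[of "range G" "\<lambda>v. F1 x v" "\<lambda>v. F2 x v"])
       (use c12 c22 s1 dense_G in auto)
qed

lemma ipc1: "bop H UNIV T \<Longrightarrow> hconv H X x \<Longrightarrow> (\<lambda>n. ip (T (X n)) y) \<longlonglongrightarrow> ip (T x) y"
  using hconv_ip cont_UNIV hconv_const by blast
lemma ipc2: "bop H UNIV T \<Longrightarrow> hconv H Y y \<Longrightarrow> (\<lambda>n. ip x (T (Y n))) \<longlonglongrightarrow> ip x (T y)"
  using hconv_ip cont_UNIV hconv_const by blast
lemma ipc1': "hconv H X x \<Longrightarrow> (\<lambda>n. ip (X n) y) \<longlonglongrightarrow> ip x y"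
  using hconv_ip hconv_const by blast
lemma ipc2': "hconv H Y y \<Longrightarrow> (\<lambda>n. ip x (Y n)) \<longlonglongrightarrow> ip x y"
  using hconv_ip hconv_const by blast

lemma L_adj: "ip (L a u) v = ip u (L (st a) v)"
proof (rule dense2[of "\<lambda>u v. ip (L a u) v" "\<lambda>u v. ip u (L (st a) v)"])
  show "ip (L a (G p)) (G q) = ip (G p) (L (st a) (G q))" for p q
    by (simp add: L_G G_ip st_mul mult.assoc)
qed (auto intro: ipc1 ipc2 ipc1' ipc2' L_bop)

lemma R_adj: "ip (R a u) v = ip u (R (st a) v)"
proof (rule dense2[of "\<lambda>u v. ip (R a u) v" "\<lambda>u v. ip u (R (st a) v)"])
  show "ip (R a (G p)) (G q) = ip (G p) (R (st a) (G q))" for p q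
    using tr_comm[of "st q * p" a] by (simp add: R_G G_ip st_mul mult.assoc)
qed (auto intro: ipc1 ipc2 ipc1' ipc2' R_bop)

lemma L_mult: "L a (L b v) = L (a * b) v"
proof -
  have "L a \<circ> L b = L (a * b)"
    by (rule bop_UNIV_eq) (auto simp: L_G mult.assoc intro: bop_comp[OF UNIV_subsp] L_bop)
  thus ?thesis by (metis comp_apply)
qed
lemma R_mult: "R a (R b v) = R (b * a) v"
proof -
  have "R a \<circ> R b = R (b * a)"
    by (rule bop_UNIV_eq) (auto simp: R_G mult.assoc intro: bop_comp[OF UNIV_subsp] R_bop)
  thus ?thesis by (metis comp_apply)
qed
lemma LR_comm: "L a (R b v) = R b (L a v)"
proof -
  have "L a \<circ> R b = R b \<circ> L a"
    by (rule bop_UNIV_eq) (auto simp: L_G R_G mult.assoc intro: bop_comp[OF UNIV_subsp] R_bop L_bop)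
  thus ?thesis by (metis comp_apply)
qed
lemma L_one: "L 1 v = v"
proof -
  have "L 1 = (\<lambda>v. v)"
    by (rule bop_UNIV_eq) (auto simp: L_G intro: L_bop bop_id[OF UNIV_subsp, simplified])
  thus ?thesis by simp
qed
lemma R_one: "R 1 v = v"
proof -
  have "R 1 = (\<lambda>v. v)"
    by (rule bop_UNIV_eq) (auto simp: R_G intro: R_bop bop_id[OF UNIV_subsp, simplified])
  thus ?thesis by simp
qed


subsection \<open>The modular conjugation J\<close>

abbreviation JJ where "JJ \<equiv> Jop P H G UNIV"

definition Jprop :: "('h \<Rightarrow> 'h) \<Rightarrow> bool" where
  "Jprop J \<longleftrightarrow> (\<forall>x. x \<notin> HH UNIV \<longrightarrow> J x = 0) \<and>
     (\<forall>x\<in>HH UNIV. \<forall>y\<in>HH UNIV. J (x + y) = J x + J y) \<and>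
     (\<forall>c. \<forall>x\<in>HH UNIV. J (sc c x) = sc (cnj c) (J x)) \<and>
     (\<exists>C. \<forall>x\<in>HH UNIV. nm (J x) \<le> C * nm x) \<and>
     (\<forall>b\<in>UNIV. J (G b) = G (st b))"

lemma nm_G_st: "nm (G (st b)) = nm (G b)"
proof -
  have "(nm (G (st b)))^2 = (nm (G b))^2"
    using tr_comm[of b "st b"] by (simp add: nm_G_sq)
  then show ?thesis by (simp add: power2_eq_iff_nonneg)
qed

lemma J_exists: "\<exists>J. Jprop J"
proof -
  define f where "f v = G (st (Ginv v))" for v
  obtain T where T: "(\<forall>x\<in>range G. T x = f x) \<and> (\<forall>x. x \<notin> hcl H (range G) \<longrightarrow> T x = 0)
     \<and> (\<forall>x\<in>hcl H (range G). \<forall>y\<in>hcl H (range G). T (x + y) = T x + T y)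
     \<and> (\<forall>c. \<forall>x\<in>hcl H (range G). T (sc c x) = sc (cnj c) (T x))
     \<and> (\<forall>x\<in>hcl H (range G). nm (T x) \<le> 1 * nm x) \<and> (\<forall>x\<in>hcl H (range G). T x \<in> UNIV)"
  proof -
    have "\<exists>T. (\<forall>x\<in>range G. T x = f x) \<and> (\<forall>x. x \<notin> hcl H (range G) \<longrightarrow> T x = 0)
     \<and> (\<forall>x\<in>hcl H (range G). \<forall>y\<in>hcl H (range G). T (x + y) = T x + T y)
     \<and> (\<forall>c. \<forall>x\<in>hcl H (range G). T (sc c x) = sc (cnj c) (T x))
     \<and> (\<forall>x\<in>hcl H (range G). nm (T x) \<le> 1 * nm x) \<and> (\<forall>x\<in>hcl H (range G). T x \<in> UNIV)
     \<and> (\<forall>X x. (\<forall>n. X n \<in> range G) \<longrightarrow> hconv H X x \<longrightarrow> hconv H (\<lambda>n. f (X n)) (T x))"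
    proof (rule extend[OF GU_subsp])
      show "hcl H UNIV \<subseteq> UNIV" by simp
      show "f (x + y) = f x + f y" if "x \<in> range G" "y \<in> range G" for x y
        using that unfolding f_def by (auto simp: G_add[symmetric] st_add)
      show "f (sc c x) = sc (cnj c) (f x)" if "x \<in> range G" for c x
        using that unfolding f_def by (auto simp: G_as[symmetric] st_as)
      show "nm (f x) \<le> 1 * nm x" if "x \<in> range G" for x
        using that unfolding f_def by (auto simp: nm_G_st)
    qed simp
    then show ?thesis using that by blast
  qed
  have "Jprop T" unfolding Jprop_def
  proof (intro conjI)
    show "\<forall>x. x \<notin> HH UNIV \<longrightarrow> T x = 0" by simp
    show "\<forall>x\<in>HH UNIV. \<forall>y\<in>HH UNIV. T (x + y) = T x + T y" using T dense by simp
    show "\<forall>c. \<forall>x\<in>HH UNIV. T (sc c x) = sc (cnj c) (T x)" using T dense by simp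
    show "\<exists>C. \<forall>x\<in>HH UNIV. nm (T x) \<le> C * nm x" using T dense by (intro exI[of _ 1]) simp
    show "\<forall>b\<in>UNIV. T (G b) = G (st b)" using T unfolding f_def by simp
  qed
  thus ?thesis by blast
qed

lemma Jprop_cont:
  assumes J: "Jprop J" and c: "hconv H X x" shows "hconv H (\<lambda>n. J (X n)) (J x)"
proof -
  obtain C where C: "\<forall>x. nm (J x) \<le> C * nm x" using J unfolding Jprop_def by auto
  have add: "\<And>x y. J (x + y) = J x + J y" using J unfolding Jprop_def by auto
  have diff: "J (x - y) = J x - J y" for x y using add[of "x - y" y] by (simp add: eq_diff_eq)
  show ?thesis
  proof (rule hconv_le)
    show "nm (J (X n) - J x) \<le> C * nm (X n - x)" for n using C diff by metis
    show "(\<lambda>n. C * nm (X n - x)) \<longlonglongrightarrow> 0" using c unfolding hconv_iff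
      by (simp add: tendsto_mult_right_zero)
  qed
qed

lemma Jprop_unique: assumes "Jprop J1" "Jprop J2" shows "J1 = J2"
proof
  fix x
  show "J1 x = J2 x"
    by (rule dense_eq_vec[of "range G" J1 J2])
       (use assms Jprop_cont dense_G in \<open>auto simp: Jprop_def\<close>)
qed

lemma JJ_prop: "Jprop JJ"
proof -
  obtain J where J: "Jprop J" using J_exists by blast
  have "Jop P H G UNIV = J" unfolding Jop_def
    by (rule the_equality) (use J Jprop_unique in \<open>auto simp: Jprop_def\<close>)
  thus ?thesis using J by simp
qed

lemma J_G0: "\<forall>b\<in>UNIV. JJ (G b) = G (st b)" using JJ_prop unfolding Jprop_def by (elim conjE) assumption
lemma J_add0: "\<forall>x\<in>HH UNIV. \<forall>y\<in>HH UNIV. JJ (x + y) = JJ x + JJ y" using JJ_prop unfolding Jprop_def by (elim conjE) assumption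
lemma J_sc0: "\<forall>c. \<forall>x\<in>HH UNIV. JJ (sc c x) = sc (cnj c) (JJ x)" using JJ_prop unfolding Jprop_def by (elim conjE) assumption
lemma J_G: "JJ (G b) = G (st b)" using J_G0 by blast
lemma J_add: "JJ (x + y) = JJ x + JJ y" using J_add0 by simp
lemma J_sc: "JJ (sc c x) = sc (cnj c) (JJ x)" using J_sc0 by simp
lemma J_cont: "hconv H X x \<Longrightarrow> hconv H (\<lambda>n. JJ (X n)) (JJ x)" using Jprop_cont[OF JJ_prop] .
lemma J_Om: "JJ Om = Om" using J_G[of 1] by simp

lemma J_J: "JJ (JJ x) = x"
proof (rule dense_eq_vec[of "range G" "\<lambda>x. JJ (JJ x)" "\<lambda>x. x"])
  show "hconv H (\<lambda>n. JJ (JJ (X n))) (JJ (JJ x))" if "hconv H X x" for X x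
    using J_cont[OF J_cont[OF that]] .
qed (auto simp: J_G dense_G)

lemma J_ip: "ip (JJ u) (JJ v) = ip v u"
proof (rule dense2[of "\<lambda>u v. ip (JJ u) (JJ v)" "\<lambda>u v. ip v u"])
  show "ip (JJ (G p)) (JJ (G q)) = ip (G q) (G p)" for p q
    using tr_comm[of q "st p"] by (simp add: J_G G_ip)
next
  show "(\<lambda>n. ip (JJ (X n)) (JJ y)) \<longlonglongrightarrow> ip (JJ x) (JJ y)" if "hconv H X x" for X x y
    using ipc1'[OF J_cont[OF that]] .
  show "(\<lambda>n. ip (JJ x) (JJ (X n))) \<longlonglongrightarrow> ip (JJ x) (JJ y)" if "hconv H X y" for X x y
    using ipc2'[OF J_cont[OF that]] .
  show "(\<lambda>n. ip y (X n)) \<longlonglongrightarrow> ip y x" if "hconv H X x" for X x y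
    using ipc2'[OF that] .
  show "(\<lambda>n. ip (X n) x) \<longlonglongrightarrow> ip y x" if "hconv H X y" for X x y
    using ipc1'[OF that] .
qed

lemma J_ip2: "ip (JJ u) v = ip (JJ v) u"
proof -
  have "ip (JJ u) (JJ (JJ v)) = ip (JJ v) u" by (rule J_ip)
  then show ?thesis by (simp only: J_J)
qed

lemma J_HA: assumes A: "subalg P A" and u: "u \<in> HH A" shows "JJ u \<in> HH A"
proof -
  obtain X where X: "\<And>n. X n \<in> G ` A" "hconv H X u" using u unfolding HA_def hcl_def by blast
  have "JJ (X n) \<in> G ` A" for n
  proof -
    obtain a where "a \<in> A" "X n = G a" using X(1)[of n] by blast
    then show ?thesis using sa_st[OF A] by (simp add: J_G)
  qed
  thus ?thesis unfolding HA_def using hclI[of "\<lambda>n. JJ (X n)" "G ` A" "JJ u"] J_cont[OF X(2)] by blast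
qed

lemma JLJ: "JJ (L a (JJ v)) = R (st a) v"
proof (rule dense_eq_vec[of "range G" "\<lambda>v. JJ (L a (JJ v))" "R (st a)"])
  show "hconv H (\<lambda>n. JJ (L a (JJ (X n)))) (JJ (L a (JJ x)))" if "hconv H X x" for X x
    using J_cont[OF cont_UNIV[OF L_bop J_cont[OF that]]] .
  show "hconv H (\<lambda>n. R (st a) (X n)) (R (st a) x)" if "hconv H X x" for X x
    using cont_UNIV[OF R_bop that] .
qed (auto simp: J_G L_G R_G st_mul dense_G)

lemma JRJ: "JJ (R a (JJ v)) = L (st a) v"
proof (rule dense_eq_vec[of "range G" "\<lambda>v. JJ (R a (JJ v))" "L (st a)"])
  show "hconv H (\<lambda>n. JJ (R a (JJ (X n)))) (JJ (R a (JJ x)))" if "hconv H X x" for X x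
    using J_cont[OF cont_UNIV[OF R_bop J_cont[OF that]]] .
  show "hconv H (\<lambda>n. L (st a) (X n)) (L (st a) x)" if "hconv H X x" for X x
    using cont_UNIV[OF L_bop that] .
qed (auto simp: J_G L_G R_G st_mul dense_G)

end

context alg begin

lemma comm_bop: "T \<in> comm H K S \<Longrightarrow> bop H K T" unfolding comm_def by blast
lemma comm_com: "T \<in> comm H K S \<Longrightarrow> s \<in> S \<Longrightarrow> x \<in> K \<Longrightarrow> T (s x) = s (T x)"
  unfolding comm_def by blast
lemma commI: "bop H K T \<Longrightarrow> (\<And>s x. s \<in> S \<Longrightarrow> x \<in> K \<Longrightarrow> T (s x) = s (T x)) \<Longrightarrow> T \<in> comm H K S"
  unfolding comm_def by blast

lemma comm_comp:
  assumes K: "subsp K" and T1: "T1 \<in> comm H K S" and T2: "T2 \<in> comm H K S"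
  shows "T1 \<circ> T2 \<in> comm H K S"
proof (rule commI)
  show "bop H K (T1 \<circ> T2)" using bop_comp[OF K comm_bop[OF T1] comm_bop[OF T2]] .
  fix s x assume s: "s \<in> S" and x: "x \<in> K"
  have "T2 x \<in> K" using bop_in[OF comm_bop[OF T2] x] .
  then show "(T1 \<circ> T2) (s x) = s ((T1 \<circ> T2) x)"
    using comm_com[OF T2 s x] comm_com[OF T1 s] by simp
qed

lemma comm_plus:
  assumes K: "subsp K" and T1: "T1 \<in> comm H K S" and T2: "T2 \<in> comm H K S"
    and Sb: "\<And>s. s \<in> S \<Longrightarrow> bop H K s"
  shows "(\<lambda>v. T1 v + T2 v) \<in> comm H K S"
proof (rule commI)
  show "bop H K (\<lambda>v. T1 v + T2 v)" using bop_plus[OF K comm_bop[OF T1] comm_bop[OF T2]] .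
  fix s x assume s: "s \<in> S" and x: "x \<in> K"
  have "s (T1 x + T2 x) = s (T1 x) + s (T2 x)"
    using bop_add[OF Sb[OF s] bop_in[OF comm_bop[OF T1] x] bop_in[OF comm_bop[OF T2] x]] .
  then show "T1 (s x) + T2 (s x) = s (T1 x + T2 x)"
    using comm_com[OF T1 s x] comm_com[OF T2 s x] by simp
qed

lemma comm_scal:
  assumes K: "subsp K" and T: "T \<in> comm H K S"
    and Sb: "\<And>s. s \<in> S \<Longrightarrow> bop H K s"
  shows "(\<lambda>v. sc c (T v)) \<in> comm H K S"
proof (rule commI)
  show "bop H K (\<lambda>v. sc c (T v))" using bop_scal[OF K comm_bop[OF T]] .
  fix s x assume s: "s \<in> S" and x: "x \<in> K"
  show "sc c (T (s x)) = s (sc c (T x))"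
    using comm_com[OF T s x] bop_sc[OF Sb[OF s] bop_in[OF comm_bop[OF T] x]] by simp
qed

lemma comm_double: "bop H K s \<Longrightarrow> s \<in> S \<Longrightarrow> s \<in> comm H K (comm H K S)"
  by (rule commI) (auto dest: comm_com)

lemma vN_bop: "x \<in> vN H G A \<Longrightarrow> bop H (HH A) x" unfolding vN_def using comm_bop by blast

lemma vN_plus: "subalg P A \<Longrightarrow> x \<in> vN H G A \<Longrightarrow> y \<in> vN H G A \<Longrightarrow> (\<lambda>v. x v + y v) \<in> vN H G A"
  unfolding vN_def by (rule comm_plus[OF HA_subsp]) (auto dest: comm_bop)
lemma vN_scal: "subalg P A \<Longrightarrow> x \<in> vN H G A \<Longrightarrow> (\<lambda>v. sc c (x v)) \<in> vN H G A"
  unfolding vN_def by (rule comm_scal[OF HA_subsp]) (auto dest: comm_bop)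
lemma vN_comp: "subalg P A \<Longrightarrow> x \<in> vN H G A \<Longrightarrow> y \<in> vN H G A \<Longrightarrow> x \<circ> y \<in> vN H G A"
  unfolding vN_def by (rule comm_comp[OF HA_subsp])
lemma lam_vN: "subalg P A \<Longrightarrow> a \<in> A \<Longrightarrow> lam H G A a \<in> vN H G A"
  unfolding vN_def by (rule comm_double[OF lam_bop]) auto

lemma rho_comm_lam:
  assumes A: "subalg P A" and a: "a \<in> A"
  shows "rho A a \<in> comm H (HH A) (lam H G A ` A)"
proof (rule commI[OF rho_bop[OF A a]])
  fix s x assume s: "s \<in> lam H G A ` A" and x: "x \<in> HH A"
  then obtain b where b: "b \<in> A" "s = lam H G A b" by blast
  have "rho A a (lam H G A b x) = R a (L b x)"
    using lam_restrict[OF A b(1) x] rho_restrict[OF A a L_HA[OF A b(1) x]] by simp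
  also have "\<dots> = L b (R a x)" by (rule LR_comm[symmetric])
  also have "\<dots> = lam H G A b (rho A a x)"
    using rho_restrict[OF A a x] lam_restrict[OF A b(1) R_HA[OF A a x]] by simp
  finally show "rho A a (s x) = s (rho A a x)" using b by simp
qed

definition RC :: "'a set \<Rightarrow> ('h \<Rightarrow> 'h) set" where
  "RC A = {x. bop H (HH A) x \<and> (\<forall>a\<in>A. \<forall>v\<in>HH A. x (R a v) = R a (x v))}"

lemma RC_bop: "x \<in> RC A \<Longrightarrow> bop H (HH A) x" unfolding RC_def by blast
lemma RC_com: "x \<in> RC A \<Longrightarrow> a \<in> A \<Longrightarrow> v \<in> HH A \<Longrightarrow> x (R a v) = R a (x v)" unfolding RC_def by blast

lemma vN_RC: assumes A: "subalg P A" and x: "x \<in> vN H G A" shows "x \<in> RC A"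
  unfolding RC_def
proof (intro CollectI conjI ballI)
  show "bop H (HH A) x" using vN_bop[OF x] .
  fix a v assume a: "a \<in> A" and v: "v \<in> HH A"
  have "x (rho A a v) = rho A a (x v)"
    using comm_com[OF x[unfolded vN_def] rho_comm_lam[OF A a] v] .
  then show "x (R a v) = R a (x v)"
    using rho_restrict[OF A a v] rho_restrict[OF A a bop_in[OF vN_bop[OF x] v]] by simp
qed

lemma vN_R: "subalg P A \<Longrightarrow> x \<in> vN H G A \<Longrightarrow> a \<in> A \<Longrightarrow> v \<in> HH A \<Longrightarrow> x (R a v) = R a (x v)"
  using vN_RC RC_com by blast

subsection \<open>Commutation theorem\<close>

lemma comm_identity: "ip (L a y) (R c (JJ x)) = ip x (L c (R (st a) (JJ y)))"
proof (rule dense2[of "\<lambda>x y. ip (L a y) (R c (JJ x))" "\<lambda>x y. ip x (L c (R (st a) (JJ y)))"])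
  show "ip (L a (G q)) (R c (JJ (G p))) = ip (G p) (L c (R (st a) (JJ (G q))))" for p q
    using tr_comm[of "st c * p" "a * q"] by (simp add: J_G L_G R_G G_ip st_mul mult.assoc)
  show "(\<lambda>n. ip (L a y) (R c (JJ (X n)))) \<longlonglongrightarrow> ip (L a y) (R c (JJ x))" if "hconv H X x" for X x y
    using ipc2'[OF cont_UNIV[OF R_bop J_cont[OF that]]] .
  show "(\<lambda>n. ip (L a (X n)) (R c (JJ x))) \<longlonglongrightarrow> ip (L a y) (R c (JJ x))" if "hconv H X y" for X x y
    using ipc1'[OF cont_UNIV[OF L_bop that]] .
  show "(\<lambda>n. ip (X n) (L c (R (st a) (JJ y)))) \<longlonglongrightarrow> ip x (L c (R (st a) (JJ y)))" if "hconv H X x" for X x y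
    using ipc1'[OF that] .
  show "(\<lambda>n. ip x (L c (R (st a) (JJ (X n))))) \<longlonglongrightarrow> ip x (L c (R (st a) (JJ y)))" if "hconv H X y" for X x y
    using ipc2'[OF cont_UNIV[OF L_bop cont_UNIV[OF R_bop J_cont[OF that]]]] .
qed

lemma HA_cont:
  assumes A: "subalg P A" and T: "bop H (HH A) T" and X: "\<And>n. X n \<in> G ` A" and c: "hconv H X x"
  shows "hconv H (\<lambda>n. T (X n)) (T x)"
  using bop_cont_D[OF GA_subsp[OF A] T[unfolded HA_def] X c] .

lemma GA_HA: "v \<in> G ` A \<Longrightarrow> v \<in> HH A" unfolding HA_def using hcl_sub by blast

lemma commutation:
  assumes A: "subalg P A" and x: "x \<in> RC A"
  shows "x \<in> vN H G A"
  unfolding vN_def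
proof (rule commI)
  show "bop H (HH A) x" using RC_bop[OF x] .
  fix T v assume T: "T \<in> comm H (HH A) (lam H G A ` A)" and v: "v \<in> HH A"
  have Tb: "bop H (HH A) T" using comm_bop[OF T] .
  have xb: "bop H (HH A) x" using RC_bop[OF x] .
  have S: "subsp (HH A)" using HA_subsp[OF A] .
  have OmA: "Om \<in> HH A" using Om_HA[OF A] .
  have TL: "T (L b w) = L b (T w)" if "b \<in> A" "w \<in> HH A" for b w
    using comm_com[OF T, of "lam H G A b" w] that lam_restrict[OF A that(1)] bop_in[OF Tb]
      L_HA[OF A] by auto
  define \<xi> where "\<xi> = x Om"
  define \<eta> where "\<eta> = T Om"
  have \<xi>A: "\<xi> \<in> HH A" unfolding \<xi>_def using bop_in[OF xb OmA] .
  have \<eta>A: "\<eta> \<in> HH A" unfolding \<eta>_def using bop_in[OF Tb OmA] .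
  have stepA: "ip (T (x (G a))) (G c) = ip (L a \<eta>) (R c (JJ \<xi>))" if a: "a \<in> A" and c: "c \<in> A" for a c
  proof -
    have "x (G a) = R a \<xi>" unfolding \<xi>_def using RC_com[OF x a OmA] R_Om by simp
    moreover have "ip (T (R a u)) (G c) = ip (L a \<eta>) (R c (JJ u))" if u: "u \<in> HH A" for u
    proof (rule dense_eq_scalar[of "G ` A" "\<lambda>u. ip (T (R a u)) (G c)" "\<lambda>u. ip (L a \<eta>) (R c (JJ u))"])
      show "(\<lambda>n. ip (T (R a (X n))) (G c)) \<longlonglongrightarrow> ip (T (R a x)) (G c)"
        if X: "\<And>n. X n \<in> G ` A" "hconv H X x" for X x
      proof -
        have xA: "x \<in> HH A" using hclI[OF X] unfolding HA_def .
        have "hconv H (\<lambda>n. T (R a (X n))) (T (R a x))"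
          using bop_cont[OF S Tb _ R_HA[OF A a xA] cont_UNIV[OF R_bop X(2)]]
            R_HA[OF A a GA_HA[OF X(1)]] by blast
        then show ?thesis using ipc1' by blast
      qed
      show "(\<lambda>n. ip (L a \<eta>) (R c (JJ (X n)))) \<longlonglongrightarrow> ip (L a \<eta>) (R c (JJ x))"
        if "\<And>n. X n \<in> G ` A" "hconv H X x" for X x
        using ipc2'[OF cont_UNIV[OF R_bop J_cont[OF that(2)]]] .
      show "ip (T (R a d)) (G c) = ip (L a \<eta>) (R c (JJ d))" if d: "d \<in> G ` A" for d
      proof -
        obtain p where p: "p \<in> A" "d = G p" using d by blast
        have "T (R a d) = T (L p (G a))" using p by (simp add: R_G L_G)
        also have "\<dots> = L p (T (G a))" using TL[OF p(1) HA_G[OF a]] .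
        also have "T (G a) = T (L a Om)" by (simp add: L_Om)
        also have "\<dots> = L a \<eta>" unfolding \<eta>_def using TL[OF a OmA] .
        finally have "ip (T (R a d)) (G c) = ip (L p (L a \<eta>)) (G c)" by simp
        also have "\<dots> = ip (L a \<eta>) (L (st p) (G c))" by (rule L_adj)
        also have "\<dots> = ip (L a \<eta>) (R c (JJ d))" using p by (simp add: L_G R_G J_G)
        finally show ?thesis .
      qed
    qed (use u in \<open>simp add: HA_def\<close>)
    ultimately show ?thesis using \<xi>A by simp
  qed
  have stepB: "ip (x (T (G a))) (G c) = ip \<xi> (L c (R (st a) (JJ \<eta>)))" if a: "a \<in> A" and c: "c \<in> A" for a c
  proof -
    have "T (G a) = L a \<eta>" unfolding \<eta>_def using TL[OF a OmA] by (simp add: L_Om)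
    moreover have "ip (x (L a u)) (G c) = ip \<xi> (L c (R (st a) (JJ u)))" if u: "u \<in> HH A" for u
    proof (rule dense_eq_scalar[of "G ` A" "\<lambda>u. ip (x (L a u)) (G c)" "\<lambda>u. ip \<xi> (L c (R (st a) (JJ u)))"])
      show "(\<lambda>n. ip (x (L a (X n))) (G c)) \<longlonglongrightarrow> ip (x (L a y)) (G c)"
        if X: "\<And>n. X n \<in> G ` A" "hconv H X y" for X y
      proof -
        have yA: "y \<in> HH A" using hclI[OF X] unfolding HA_def .
        have "hconv H (\<lambda>n. x (L a (X n))) (x (L a y))"
          using bop_cont[OF S xb _ L_HA[OF A a yA] cont_UNIV[OF L_bop X(2)]]
            L_HA[OF A a GA_HA[OF X(1)]] by blast
        then show ?thesis using ipc1' by blast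
      qed
      show "(\<lambda>n. ip \<xi> (L c (R (st a) (JJ (X n))))) \<longlonglongrightarrow> ip \<xi> (L c (R (st a) (JJ y)))"
        if "\<And>n. X n \<in> G ` A" "hconv H X y" for X y
        using ipc2'[OF cont_UNIV[OF L_bop cont_UNIV[OF R_bop J_cont[OF that(2)]]]] .
      show "ip (x (L a d)) (G c) = ip \<xi> (L c (R (st a) (JJ d)))" if d: "d \<in> G ` A" for d
      proof -
        obtain q where q: "q \<in> A" "d = G q" using d by blast
        have "x (L a d) = x (R q (G a))" using q by (simp add: R_G L_G)
        also have "\<dots> = R q (x (G a))" using RC_com[OF x q(1) HA_G[OF a]] .
        also have "x (G a) = R a \<xi>" unfolding \<xi>_def using RC_com[OF x a OmA] R_Om by simp
        finally have "ip (x (L a d)) (G c) = ip (R q (R a \<xi>)) (G c)" by simp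
        also have "\<dots> = ip (R a \<xi>) (R (st q) (G c))" by (rule R_adj)
        also have "\<dots> = ip \<xi> (R (st a) (R (st q) (G c)))" by (rule R_adj)
        also have "\<dots> = ip \<xi> (L c (R (st a) (JJ d)))" using q by (simp add: L_G R_G J_G mult.assoc)
        finally show ?thesis .
      qed
    qed (use u in \<open>simp add: HA_def\<close>)
    ultimately show ?thesis using \<eta>A by simp
  qed
  have eqG: "T (x (G a)) = x (T (G a))" if a: "a \<in> A" for a
  proof -
    have "T (x (G a)) - x (T (G a)) = 0"
    proof (rule orth_dense_zero[OF GA_subsp[OF A]])
      have "T (x (G a)) \<in> HH A" using bop_in[OF Tb bop_in[OF xb HA_G[OF a]]] .
      moreover have "x (T (G a)) \<in> HH A" using bop_in[OF xb bop_in[OF Tb HA_G[OF a]]] .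
      ultimately show "T (x (G a)) - x (T (G a)) \<in> hcl H (G ` A)"
        using subsp_diff[OF S] unfolding HA_def by blast
      fix d assume "d \<in> G ` A"
      then obtain c where c: "c \<in> A" "d = G c" by blast
      show "ip (T (x (G a)) - x (T (G a))) d = 0"
        using stepA[OF a c(1)] stepB[OF a c(1)] comm_identity[of a \<eta> c \<xi>] c(2)
        by (simp add: ip_diff1)
    qed
    thus ?thesis by simp
  qed
  have "T \<circ> x = x \<circ> T"
    by (rule op_unique[OF A bop_comp[OF S Tb xb] bop_comp[OF S xb Tb]]) (simp add: eqG)
  then show "x (T v) = T (x v)" by (metis comp_apply)
qed

lemma vN_eq_RC: "subalg P A \<Longrightarrow> vN H G A = RC A"
  using commutation vN_RC by blast

end

lemma real_iter:
  fixes bb :: "nat \<Rightarrow> real"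
  assumes nn: "\<And>k. 0 \<le> bb k" and r: "r \<ge> 0" and sq: "\<And>k. (bb k)^2 \<le> bb (Suc k) * r"
    and up: "\<And>k. bb k \<le> A * B ^ (2^k)" and B: "B > 0"
  shows "bb 0 \<le> B * r"
proof (rule ccontr)
  assume "\<not> bb 0 \<le> B * r"
  then have gt: "bb 0 > B * r" by simp
  show False
  proof (cases "r = 0")
    case True
    then have "(bb 0)^2 \<le> 0" using sq[of 0] by simp
    then have "bb 0 = 0" by simp
    then show False using gt True by simp
  next
    case False
    then have rp: "r > 0" using r by simp
    define c where "c k = bb k / r" for k
    have cn: "c k \<ge> 0" for k unfolding c_def using nn rp by simp
    have csq: "(c k)^2 \<le> c (Suc k)" for k
    proof -
      have "(c k)^2 = (bb k)^2 / r^2" unfolding c_def by (simp add: power_divide)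
      also have "\<dots> \<le> bb (Suc k) * r / r^2" using sq[of k] rp by (simp add: divide_right_mono)
      also have "\<dots> = c (Suc k)" unfolding c_def using rp by (simp add: power2_eq_square)
      finally show ?thesis .
    qed
    have c0: "c 0 > B" unfolding c_def using gt rp by (simp add: field_simps)
    have pw: "c 0 ^ (2^k) \<le> c k" for k
    proof (induction k)
      case 0 then show ?case by simp
    next
      case (Suc k)
      have "c 0 ^ (2 ^ Suc k) = (c 0 ^ (2^k))^2" by (simp add: power_mult[symmetric] mult.commute)
      also have "\<dots> \<le> (c k)^2" using Suc cn[of 0] by (simp add: power_mono)
      also have "\<dots> \<le> c (Suc k)" by (rule csq)
      finally show ?case .
    qed
    define q where "q = c 0 / B"
    have q1: "q > 1" unfolding q_def using c0 B by simp
    have qb: "q ^ k \<le> A / r" for k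
    proof -
      have "q ^ k \<le> q ^ (2^k)" using q1 by (intro power_increasing) (simp_all add: less_imp_le)
      also have "\<dots> = c 0 ^ (2^k) / B ^ (2^k)" unfolding q_def by (simp add: power_divide)
      also have "\<dots> \<le> c k / B ^ (2^k)" using pw B by (simp add: divide_right_mono)
      also have "\<dots> \<le> (A * B ^ (2^k) / r) / B ^ (2^k)"
      proof -
        have "c k \<le> A * B ^ (2^k) / r" unfolding c_def using up[of k] rp by (simp add: divide_right_mono)
        moreover have "B ^ (2^k) > 0" using B by simp
        ultimately show ?thesis by (intro divide_right_mono) simp_all
      qed
      also have "\<dots> = A / r" using B by simp
      finally show ?thesis .
    qed
    obtain n where "A / r < q ^ n" using real_arch_pow[OF q1] by blast
    then show False using qb[of n] by simp
  qed
qed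

context alg begin

lemma xstar_Om:
  assumes A: "subalg P A" and x: "x \<in> RC A"
  shows "adj H (HH A) x Om = JJ (x Om)"
proof -
  have K: "csub (HH A)" using HA_csub[OF A] .
  have xb: "bop H (HH A) x" using RC_bop[OF x] .
  have OmA: "Om \<in> HH A" using Om_HA[OF A] .
  show ?thesis
  proof (rule ip_dense_eq[OF GA_subsp[OF A]])
    show "adj H (HH A) x Om \<in> hcl H (G ` A)"
      using bop_in[OF adj_bop[OF K xb] OmA] unfolding HA_def .
    show "JJ (x Om) \<in> hcl H (G ` A)" using J_HA[OF A bop_in[OF xb OmA]] unfolding HA_def .
    fix d assume "d \<in> G ` A"
    then obtain a where a: "a \<in> A" "d = G a" by blast
    have "ip (adj H (HH A) x Om) (G a) = ip Om (x (G a))"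
      using adj_ip2[OF K xb OmA HA_G[OF a(1)]] .
    also have "x (G a) = R a (x Om)" using RC_com[OF x a(1) OmA] R_Om by simp
    also have "ip Om (R a (x Om)) = ip (R (st a) Om) (x Om)" using R_adj[of "st a" Om "x Om"] by simp
    also have "\<dots> = ip (JJ (G a)) (x Om)" by (simp add: R_Om J_G)
    also have "\<dots> = ip (JJ (x Om)) (G a)" by (rule J_ip2)
    finally show "ip (adj H (HH A) x Om) d = ip (JJ (x Om)) d" using a by simp
  qed
qed

lemma ret_in: "retraction P A E \<Longrightarrow> E a \<in> A" unfolding retraction_def by blast
lemma ret_id: "retraction P A E \<Longrightarrow> a \<in> A \<Longrightarrow> E a = a" unfolding retraction_def by blast
lemma ret_add: "retraction P A E \<Longrightarrow> E (a + b) = E a + E b" unfolding retraction_def by blast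
lemma ret_bi: "retraction P A E \<Longrightarrow> x \<in> A \<Longrightarrow> y \<in> A \<Longrightarrow> E (x * a * y) = x * E a * y"
  unfolding retraction_def by blast
lemma ret_st: "retraction P A E \<Longrightarrow> E (st a) = st (E a)" unfolding retraction_def by blast
lemma ret_tr: "retraction P A E \<Longrightarrow> tr (E a) = tr a" unfolding retraction_def by blast
lemma ret_left: "subalg P A \<Longrightarrow> retraction P A E \<Longrightarrow> x \<in> A \<Longrightarrow> E (x * a) = x * E a"
  using ret_bi[of A E x 1 a] sa_1 by simp
lemma ret_right: "subalg P A \<Longrightarrow> retraction P A E \<Longrightarrow> y \<in> A \<Longrightarrow> E (a * y) = E a * y"
  using ret_bi[of A E 1 y a] sa_1 by simp

abbreviation ee where "ee A \<equiv> proj (HH A)"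

lemma e_G:
  assumes A: "subalg P A" and E: "retraction P A E"
  shows "ee A (G b) = G (E b)"
proof (rule proj_eqI[OF HA_csub[OF A]])
  show "G (E b) \<in> HH A" using HA_G ret_in[OF E] by blast
  fix k assume k: "k \<in> HH A"
  show "ip (G b) k = ip (G (E b)) k"
  proof (rule dense_eq_scalar[of "G ` A" "ip (G b)" "ip (G (E b))"])
    show "(\<lambda>n. ip (G b) (X n)) \<longlonglongrightarrow> ip (G b) x" if "\<And>n. X n \<in> G ` A" "hconv H X x" for X x
      using ipc2'[OF that(2)] .
    show "(\<lambda>n. ip (G (E b)) (X n)) \<longlonglongrightarrow> ip (G (E b)) x" if "\<And>n. X n \<in> G ` A" "hconv H X x" for X x
      using ipc2'[OF that(2)] .
    show "ip (G b) d = ip (G (E b)) d" if hd: "d \<in> G ` A" for d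
    proof -
      obtain a where a: "a \<in> A" "d = G a" using hd by blast
      have "tr (st a * E b) = tr (E (st a * b))" using ret_left[OF A E sa_st[OF A a(1)]] by simp
      also have "\<dots> = tr (st a * b)" using ret_tr[OF E] .
      finally show ?thesis using a by (simp add: G_ip)
    qed
    show "k \<in> hcl H (G ` A)" using k unfolding HA_def .
  qed
qed

lemma proj_bop: assumes K: "csub K" shows "bop H UNIV (proj K)"
  unfolding bop_def
proof (intro conjI ballI allI impI)
  show "proj K (x + y) = proj K x + proj K y" for x y using proj_add[OF K] .
  show "proj K (sc c x) = sc c (proj K x)" for c x using proj_sc[OF K] .
  show "\<exists>C. \<forall>x\<in>UNIV. nm (proj K x) \<le> C * nm x" using proj_nm[OF K] by (intro exI[of _ 1]) simp
qed simp_all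

lemma e_bop: "subalg P A \<Longrightarrow> bop H UNIV (ee A)" using proj_bop HA_csub by blast

lemma e_R:
  assumes A: "subalg P A" and E: "retraction P A E" and a: "a \<in> A"
  shows "ee A (R a v) = R a (ee A v)"
proof -
  have "ee A \<circ> R a = R a \<circ> ee A"
  proof (rule bop_UNIV_eq)
    show "bop H UNIV (ee A \<circ> R a)" using bop_comp[OF UNIV_subsp e_bop[OF A] R_bop] .
    show "bop H UNIV (R a \<circ> ee A)" using bop_comp[OF UNIV_subsp R_bop e_bop[OF A]] .
    fix b show "(ee A \<circ> R a) (G b) = (R a \<circ> ee A) (G b)"
      using ret_right[OF A E a] by (simp add: R_G e_G[OF A E])
  qed
  then show ?thesis by (metis comp_apply)
qed

lemma e_L:
  assumes A: "subalg P A" and E: "retraction P A E" and a: "a \<in> A"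
  shows "ee A (L a v) = L a (ee A v)"
proof -
  have "ee A \<circ> L a = L a \<circ> ee A"
  proof (rule bop_UNIV_eq)
    show "bop H UNIV (ee A \<circ> L a)" using bop_comp[OF UNIV_subsp e_bop[OF A] L_bop] .
    show "bop H UNIV (L a \<circ> ee A)" using bop_comp[OF UNIV_subsp L_bop e_bop[OF A]] .
    fix b show "(ee A \<circ> L a) (G b) = (L a \<circ> ee A) (G b)"
      using ret_left[OF A E a] by (simp add: L_G e_G[OF A E])
  qed
  then show ?thesis by (metis comp_apply)
qed

lemma e_R_HA:
  assumes A: "subalg P A" and E: "retraction P A E" and v: "v \<in> HH A"
  shows "ee A (R b v) = R (E b) v"
proof (rule dense_eq_vec[of "G ` A" "\<lambda>v. ee A (R b v)" "R (E b)"])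
  show "hconv H (\<lambda>n. ee A (R b (X n))) (ee A (R b x))" if "\<And>n. X n \<in> G ` A" "hconv H X x" for X x
    using cont_UNIV[OF e_bop[OF A] cont_UNIV[OF R_bop that(2)]] .
  show "hconv H (\<lambda>n. R (E b) (X n)) (R (E b) x)" if "\<And>n. X n \<in> G ` A" "hconv H X x" for X x
    using cont_UNIV[OF R_bop that(2)] .
  show "ee A (R b d) = R (E b) d" if hd: "d \<in> G ` A" for d
  proof -
    obtain a where a: "a \<in> A" "d = G a" using hd by blast
    then show ?thesis using ret_left[OF A E a(1)] by (simp add: R_G e_G[OF A E])
  qed
  show "v \<in> hcl H (G ` A)" using v unfolding HA_def .
qed

lemma R_E:
  assumes A: "subalg P A" and E: "retraction P A E" and u: "u \<in> HH A" and w: "w \<in> HH A"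
  shows "ip (R b u) w = ip (R (E b) u) w"
proof -
  have K: "csub (HH A)" using HA_csub[OF A] .
  have "ip (R b u) w = ip (R b u) (ee A w)" using proj_id[OF K w] by simp
  also have "\<dots> = ip (ee A (R b u)) w" using proj_sym[OF K] by simp
  also have "\<dots> = ip (R (E b) u) w" using e_R_HA[OF A E u] by simp
  finally show ?thesis .
qed


subsection \<open>The iteration bound\<close>

lemma bop_bound2: assumes "bop H K T" shows "\<exists>C>0. \<forall>x\<in>K. nm (T x) \<le> C * nm x"
proof -
  obtain C where C: "\<forall>x\<in>K. nm (T x) \<le> C * nm x" using assms unfolding bop_def by blast
  have "nm (T x) \<le> (max C 1) * nm x" if x: "x \<in> K" for x
  proof -
    have "nm (T x) \<le> C * nm x" using C x by blast
    also have "C * nm x \<le> max C 1 * nm x" by (rule mult_right_mono) simp_all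
    finally show ?thesis .
  qed
  moreover have "max C 1 > 0" by simp
  ultimately show ?thesis by blast
qed

lemma iter_main:
  assumes K: "csub K" and Sb: "bop H K S" and Q: "bop H UNIV Q"
    and QQ: "\<And>u w. u \<in> K \<Longrightarrow> w \<in> K \<Longrightarrow> ip (Q (S u)) (Q w) = ip (Q u) (Q (S w))"
    and CS: "CS > 0" "\<And>u. u \<in> K \<Longrightarrow> nm (S u) \<le> CS * nm u"
    and u: "u \<in> K"
  shows "nm (Q (S u)) \<le> CS * nm (Q u)"
proof -
  obtain CQ where CQ0: "CQ > 0" "\<forall>v\<in>UNIV. nm (Q v) \<le> CQ * nm v" using bop_bound2[OF Q] by blast
  have CQ: "CQ > 0" "\<And>v. nm (Q v) \<le> CQ * nm v" using CQ0 by simp_all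
  have Sn: "(S^^n) v \<in> K \<and> nm ((S^^n) v) \<le> CS^n * nm v" if v: "v \<in> K" for n v
  proof (induction n)
    case 0 show ?case using v by simp
  next
    case (Suc n)
    have i0: "(S^^n) v \<in> K" using Suc.IH by (rule conjunct1)
    have b0: "nm ((S^^n) v) \<le> CS^n * nm v" using Suc.IH by (rule conjunct2)
    have in1: "(S^^Suc n) v \<in> K" using bop_in[OF Sb i0] by simp
    have "nm ((S^^Suc n) v) = nm (S ((S^^n) v))" by simp
    also have "\<dots> \<le> CS * nm ((S^^n) v)" using CS(2)[OF i0] .
    also have "\<dots> \<le> CS * (CS^n * nm v)" using mult_left_mono[OF b0] CS(1) by simp
    also have "\<dots> = CS^Suc n * nm v" by (simp add: mult.assoc)
    finally show ?case using in1 by simp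
  qed
  have QQn: "ip (Q ((S^^n) v)) (Q w) = ip (Q v) (Q ((S^^n) w))" if "v \<in> K" "w \<in> K" for n v w
    using that
  proof (induction n arbitrary: w)
    case 0 then show ?case by simp
  next
    case (Suc n)
    have Sw: "S w \<in> K" using bop_in[OF Sb Suc.prems(2)] .
    have "ip (Q ((S^^Suc n) v)) (Q w) = ip (Q (S ((S^^n) v))) (Q w)" by simp
    also have "\<dots> = ip (Q ((S^^n) v)) (Q (S w))"
      using QQ[OF conjunct1[OF Sn[OF Suc.prems(1)]] Suc.prems(2)] .
    also have "\<dots> = ip (Q v) (Q ((S^^n) (S w)))" using Suc.IH[OF Suc.prems(1) Sw] .
    also have "(S^^n) (S w) = (S^^Suc n) w" by (simp only: funpow_Suc_right comp_apply)
    finally show ?case .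
  qed
  define r where "r = nm (Q u)"
  define bb where "bb k = nm (Q ((S^^(2^k)) u))" for k
  have sq: "(bb k)^2 \<le> bb (Suc k) * r" for k
  proof -
    define m :: nat where "m = 2^k"
    have smu: "(S^^m) u \<in> K" using Sn[OF u] by blast
    have "(bb k)^2 = Re (ip (Q ((S^^m) u)) (Q ((S^^m) u)))" unfolding bb_def m_def by (rule nm_sq)
    also have "ip (Q ((S^^m) u)) (Q ((S^^m) u)) = ip (Q u) (Q ((S^^m) ((S^^m) u)))"
      using QQn[OF u smu] .
    also have "(S^^m) ((S^^m) u) = (S^^(2^Suc k)) u"
    proof -
      have "(2::nat)^Suc k = m + m" unfolding m_def by simp
      then show ?thesis by (simp only: funpow_add comp_apply)
    qed
    also have "Re (ip (Q u) (Q ((S^^(2^Suc k)) u))) \<le> cmod (ip (Q u) (Q ((S^^(2^Suc k)) u)))"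
      by (rule complex_Re_le_cmod)
    also have "\<dots> \<le> r * bb (Suc k)" unfolding r_def bb_def by (rule cauchy_schwarz)
    finally show ?thesis by (simp add: mult.commute)
  qed
  have up: "bb k \<le> (CQ * nm u) * CS ^ (2^k)" for k
  proof -
    have "bb k \<le> CQ * nm ((S^^(2^k)) u)" unfolding bb_def by (rule CQ(2))
    also have "\<dots> \<le> CQ * (CS^(2^k) * nm u)" using Sn[OF u] CQ(1) by (simp add: mult_left_mono)
    finally show ?thesis by (simp add: algebra_simps)
  qed
  have "bb 0 \<le> CS * r"
  proof (rule real_iter[of bb r "CQ * nm u" CS])
    show "0 \<le> bb k" for k unfolding bb_def by simp
    show "0 \<le> r" unfolding r_def by simp
    show "(bb k)^2 \<le> bb (Suc k) * r" for k by (rule sq)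
    show "bb k \<le> CQ * nm u * CS ^ 2 ^ k" for k by (rule up)
    show "0 < CS" by (rule CS(1))
  qed
  then show ?thesis unfolding bb_def r_def by simp
qed

lemma iota_bound:
  assumes A: "subalg P A" and E: "retraction P A E" and x: "x \<in> RC A"
  shows "\<exists>C. \<forall>b. nm (R b (x Om)) \<le> C * nm (G b)"
proof -
  have K: "csub (HH A)" using HA_csub[OF A] .
  have S0: "subsp (HH A)" using HA_subsp[OF A] .
  have xb: "bop H (HH A) x" using RC_bop[OF x] .
  define xs where "xs = adj H (HH A) x"
  have xsb: "bop H (HH A) xs" unfolding xs_def using adj_bop[OF K xb] .
  have xsip: "ip (x v) w = ip v (xs w)" if "v \<in> HH A" "w \<in> HH A" for v w
    unfolding xs_def using adj_ip[OF K xb that] .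
  define S where "S = xs \<circ> x"
  have Sb: "bop H (HH A) S" unfolding S_def using bop_comp[OF S0 xsb xb] .
  obtain CS where CS: "CS > 0" "\<And>u. u \<in> HH A \<Longrightarrow> nm (S u) \<le> CS * nm u" using bop_bound[OF Sb] by blast
  have OmA: "Om \<in> HH A" using Om_HA[OF A] .
  have "nm (R b (x Om)) \<le> sqrt CS * nm (G b)" for b
  proof -
    define d where "d = E (b * st b)"
    have dA: "d \<in> A" unfolding d_def using ret_in[OF E] .
    have stdA: "st d \<in> A" using sa_st[OF A dA] .
    have PQ: "ip (R b v) (R b w) = ip (R d v) w" if "v \<in> HH A" "w \<in> HH A" for v w
    proof -
      have "ip (R b v) (R b w) = ip (R (st b) (R b v)) w" using R_adj[of "st b" "R b v" w] by simp
      also have "\<dots> = ip (R (b * st b) v) w" by (simp add: R_mult)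
      also have "\<dots> = ip (R d v) w" unfolding d_def using R_E[OF A E that] .
      finally show ?thesis .
    qed
    have xR: "x (R d v) = R d (x v)" if "v \<in> HH A" for v using RC_com[OF x dA that] .
    have xsR: "xs (R d v) = R d (xs v)" if v: "v \<in> HH A" for v
    proof (rule rep_unique[OF K])
      show "xs (R d v) \<in> HH A" using bop_in[OF xsb R_HA[OF A dA v]] .
      show "R d (xs v) \<in> HH A" using R_HA[OF A dA bop_in[OF xsb v]] .
      fix w assume w: "w \<in> HH A"
      have "ip w (xs (R d v)) = ip (x w) (R d v)" using xsip[OF w R_HA[OF A dA v]] by simp
      also have "\<dots> = ip (R (st d) (x w)) v" using R_adj[of "st d" "x w" v] by simp
      also have "\<dots> = ip (x (R (st d) w)) v" using RC_com[OF x stdA w] by simp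
      also have "\<dots> = ip (R (st d) w) (xs v)" using xsip[OF R_HA[OF A stdA w] v] .
      also have "\<dots> = ip w (R d (xs v))" using R_adj[of "st d" w "xs v"] by simp
      finally show "ip w (xs (R d v)) = ip w (R d (xs v))" .
    qed
    have SR: "S (R d v) = R d (S v)" if v: "v \<in> HH A" for v
      unfolding S_def using xR[OF v] xsR[OF bop_in[OF xb v]] by simp
    have Ssa: "ip (S v) w = ip v (S w)" if "v \<in> HH A" "w \<in> HH A" for v w
    proof -
      have "ip (S v) w = cnj (ip w (xs (x v)))" unfolding S_def comp_def by (rule ip_conj)
      also have "ip w (xs (x v)) = ip (x w) (x v)" using xsip[OF that(2) bop_in[OF xb that(1)]] by simp
      also have "cnj (ip (x w) (x v)) = ip (x v) (x w)" using ip_conj[of "x v" "x w"] by simp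
      also have "\<dots> = ip v (S w)" unfolding S_def using xsip[OF that(1) bop_in[OF xb that(2)]] by simp
      finally show ?thesis .
    qed
    have QQ: "ip (R b (S v)) (R b w) = ip (R b v) (R b (S w))" if "v \<in> HH A" "w \<in> HH A" for v w
    proof -
      have Sv: "S v \<in> HH A" "S w \<in> HH A" using bop_in[OF Sb] that by blast+
      have "ip (R b (S v)) (R b w) = ip (R d (S v)) w" using PQ[OF Sv(1) that(2)] .
      also have "\<dots> = ip (S (R d v)) w" using SR[OF that(1)] by simp
      also have "\<dots> = ip (R d v) (S w)" using Ssa[OF R_HA[OF A dA that(1)] that(2)] .
      also have "\<dots> = ip (R b v) (R b (S w))" using PQ[OF that(1) Sv(2)] by simp
      finally show ?thesis .
    qed
    have it: "nm (R b (S Om)) \<le> CS * nm (R b Om)"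
      by (rule iter_main[OF K Sb R_bop QQ CS OmA])
    have "(nm (R b (x Om)))^2 = Re (ip (R b (x Om)) (R b (x Om)))" by (rule nm_sq)
    also have "ip (R b (x Om)) (R b (x Om)) = ip (R d (x Om)) (x Om)"
      using PQ[OF bop_in[OF xb OmA] bop_in[OF xb OmA]] .
    also have "\<dots> = ip (x (R d Om)) (x Om)" using xR[OF OmA] by simp
    also have "\<dots> = ip (R d Om) (S Om)" unfolding S_def using xsip[OF R_HA[OF A dA OmA] bop_in[OF xb OmA]] by simp
    also have "\<dots> = ip (R b Om) (R b (S Om))" using PQ[OF OmA bop_in[OF Sb OmA]] by simp
    also have "Re (ip (R b Om) (R b (S Om))) \<le> cmod (ip (R b Om) (R b (S Om)))" by (rule complex_Re_le_cmod)
    also have "\<dots> \<le> nm (R b Om) * nm (R b (S Om))" by (rule cauchy_schwarz)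
    also have "\<dots> \<le> nm (R b Om) * (CS * nm (R b Om))" using it by (simp add: mult_left_mono)
    finally have "(nm (R b (x Om)))^2 \<le> CS * (nm (G b))^2" by (simp add: R_Om power2_eq_square mult.commute mult.left_commute)
    then have "sqrt ((nm (R b (x Om)))^2) \<le> sqrt (CS * (nm (G b))^2)" by (rule real_sqrt_le_mono)
    then show ?thesis by (simp add: real_sqrt_mult)
  qed
  then show ?thesis by blast
qed

lemma R_addl: "R (a + b) v = R a v + R b v"
proof -
  have "R (a + b) = (\<lambda>v. R a v + R b v)"
    by (rule bop_UNIV_eq[OF R_bop bop_plus[OF UNIV_subsp R_bop R_bop]]) (simp add: R_G distrib_left G_add)
  then show ?thesis by simp
qed

lemma R_asl: "R (as c a) v = sc c (R a v)"
proof -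
  have "R (as c a) = (\<lambda>v. sc c (R a v))"
    by (rule bop_UNIV_eq[OF R_bop bop_scal[OF UNIV_subsp R_bop]]) (simp add: R_G as_m2[symmetric] G_as)
  then show ?thesis by simp
qed

lemma iota_ex:
  assumes A: "subalg P A" and E: "retraction P A E" and x: "x \<in> RC A"
  shows "\<exists>T. bop H UNIV T \<and> (\<forall>b. T (G b) = R b (x Om))"
proof -
  obtain C where C: "\<forall>b. nm (R b (x Om)) \<le> C * nm (G b)" using iota_bound[OF A E x] by blast
  define f where "f v = R (Ginv v) (x Om)" for v
  have "\<exists>T. bop H (hcl H (range G)) T \<and> (\<forall>v\<in>range G. T v = f v)"
  proof (rule extend_bop[OF GU_subsp])
    show "f (v + w) = f v + f w" if "v \<in> range G" "w \<in> range G" for v w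
      using that unfolding f_def by (auto simp: G_add[symmetric] R_addl)
    show "f (sc c v) = sc c (f v)" if "v \<in> range G" for c v
      using that unfolding f_def by (auto simp: G_as[symmetric] R_asl)
    show "nm (f v) \<le> C * nm v" if "v \<in> range G" for v
      using that C unfolding f_def by auto
    show "f v \<in> hcl H (range G)" for v using dense by simp
  qed
  then show ?thesis using dense unfolding f_def by auto
qed

lemma iota_char:
  assumes A: "subalg P A" and E: "retraction P A E" and x: "x \<in> vN H G A"
  shows "bop H UNIV (iota P H G A UNIV x) \<and> (\<forall>b. iota P H G A UNIV x (G b) = R b (x Om))"
proof -
  have xR: "x \<in> RC A" using vN_RC[OF A x] .
  obtain T where T: "bop H UNIV T" "\<forall>b. T (G b) = R b (x Om)" using iota_ex[OF A E xR] by blast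
  have key: "JJ (L (st b) (adj H (HH A) x Om)) = R b (x Om)" for b
    using xstar_Om[OF A xR] JLJ[of "st b" "x Om"] by simp
  have "iota P H G A UNIV x = T" unfolding iota_def
  proof (rule the_equality)
    show "bop H (HH UNIV) T \<and> (\<forall>b\<in>UNIV. T (G b) = JJ (L (st b) (adj H (HH A) x Om)))"
      using T key by simp
    fix T' assume "bop H (HH UNIV) T' \<and> (\<forall>b\<in>UNIV. T' (G b) = JJ (L (st b) (adj H (HH A) x Om)))"
    then have "bop H UNIV T'" "\<forall>b. T' (G b) = R b (x Om)" using key by auto
    then show "T' = T" using bop_UNIV_eq[OF _ T(1)] T(2) by simp
  qed
  then show ?thesis using T by simp
qed

end

context alg begin

abbreviation io where "io A x \<equiv> iota P H G A UNIV x"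
abbreviation MM where "MM \<equiv> vN H G UNIV"

lemma io_bop: "subalg P A \<Longrightarrow> retraction P A E \<Longrightarrow> x \<in> vN H G A \<Longrightarrow> bop H UNIV (io A x)"
  using iota_char by blast
lemma io_G: "subalg P A \<Longrightarrow> retraction P A E \<Longrightarrow> x \<in> vN H G A \<Longrightarrow> io A x (G b) = R b (x Om)"
  using iota_char by blast

lemma MM_bop: "y \<in> MM \<Longrightarrow> bop H UNIV y" using vN_bop[of y UNIV] by simp
lemma MM_R: "y \<in> MM \<Longrightarrow> y (R a v) = R a (y v)" using vN_R[OF sa_UNIV, of y a v] by simp

lemma RC_UNIV_I: "bop H UNIV T \<Longrightarrow> (\<And>a v. T (R a v) = R a (T v)) \<Longrightarrow> T \<in> MM"
  using commutation[OF sa_UNIV, of T] unfolding RC_def by simp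

lemma io_MM:
  assumes A: "subalg P A" and E: "retraction P A E" and x: "x \<in> vN H G A"
  shows "io A x \<in> MM"
proof (rule RC_UNIV_I[OF io_bop[OF A E x]])
  fix a v
  have "io A x \<circ> R a = R a \<circ> io A x"
  proof (rule bop_UNIV_eq)
    show "bop H UNIV (io A x \<circ> R a)" using bop_comp[OF UNIV_subsp io_bop[OF A E x] R_bop] .
    show "bop H UNIV (R a \<circ> io A x)" using bop_comp[OF UNIV_subsp R_bop io_bop[OF A E x]] .
    fix b show "(io A x \<circ> R a) (G b) = (R a \<circ> io A x) (G b)"
      by (simp add: R_G io_G[OF A E x] R_mult)
  qed
  then show "io A x (R a v) = R a (io A x v)" by (metis comp_apply)
qed

lemma io_HA:
  assumes A: "subalg P A" and E: "retraction P A E" and x: "x \<in> vN H G A" and v: "v \<in> HH A"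
  shows "io A x v = x v"
proof -
  have "x v = io A x v"
  proof (rule restrict_eq[OF A vN_bop[OF x] io_bop[OF A E x] _ v])
    fix a assume a: "a \<in> A"
    have "x (G a) = x (R a Om)" by (simp add: R_Om)
    also have "\<dots> = R a (x Om)" using vN_R[OF A x a Om_HA[OF A]] .
    finally show "x (G a) = io A x (G a)" using io_G[OF A E x] by simp
  qed
  then show ?thesis by simp
qed

lemma io_Om: "subalg P A \<Longrightarrow> retraction P A E \<Longrightarrow> x \<in> vN H G A \<Longrightarrow> io A x Om = x Om"
  using io_HA Om_HA by blast

lemma io_lam:
  assumes A: "subalg P A" and E: "retraction P A E" and a: "a \<in> A"
  shows "io A (lam H G A a) = L a"
proof (rule bop_UNIV_eq[OF io_bop[OF A E lam_vN[OF A a]] L_bop])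
  fix b
  have "lam H G A a Om = G a" using lam_G[OF A a sa_1[OF A]] by simp
  then show "io A (lam H G A a) (G b) = L a (G b)"
    using io_G[OF A E lam_vN[OF A a]] by (simp add: R_G L_G)
qed

lemma io_adj_G:
  assumes A: "subalg P A" and E: "retraction P A E" and x: "x \<in> vN H G A" and a: "a \<in> A"
  shows "ip (io A x u) (G a) = ip u (R a (JJ (x Om)))"
proof (rule dense_eq_scalar[of "range G" "\<lambda>u. ip (io A x u) (G a)" "\<lambda>u. ip u (R a (JJ (x Om)))"])
  show "(\<lambda>n. ip (io A x (X n)) (G a)) \<longlonglongrightarrow> ip (io A x y) (G a)" if "\<And>n. X n \<in> range G" "hconv H X y" for X y
    using ipc1[OF io_bop[OF A E x] that(2)] .
  show "(\<lambda>n. ip (X n) (R a (JJ (x Om)))) \<longlonglongrightarrow> ip y (R a (JJ (x Om)))" if "\<And>n. X n \<in> range G" "hconv H X y" for X y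
    using ipc1'[OF that(2)] .
  show "u \<in> hcl H (range G)" using dense_G .
  fix d assume "d \<in> range G"
  then obtain b where b: "d = G b" by blast
  define \<xi> where "\<xi> = x Om"
  have "ip (io A x (G b)) (G a) = ip (R b \<xi>) (G a)" unfolding \<xi>_def using io_G[OF A E x] by simp
  also have "\<dots> = ip \<xi> (R (st b) (G a))" by (rule R_adj)
  also have "\<dots> = ip \<xi> (G (a * st b))" by (simp add: R_G)
  finally have l: "ip (io A x (G b)) (G a) = ip \<xi> (G (a * st b))" .
  have "ip (G b) (R a (JJ \<xi>)) = ip (R (st a) (G b)) (JJ \<xi>)" using R_adj[of "st a" "G b" "JJ \<xi>"] by simp
  also have "\<dots> = ip (G (b * st a)) (JJ \<xi>)" by (simp add: R_G)
  also have "\<dots> = ip (JJ (JJ (G (b * st a)))) (JJ \<xi>)" by (simp add: J_J)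
  also have "\<dots> = ip \<xi> (JJ (G (b * st a)))" by (rule J_ip)
  also have "\<dots> = ip \<xi> (G (a * st b))" by (simp add: J_G st_mul)
  finally show "ip (io A x d) (G a) = ip d (R a (JJ (x Om)))" using l b unfolding \<xi>_def by simp
qed

lemma io_e:
  assumes A: "subalg P A" and E: "retraction P A E" and x: "x \<in> vN H G A"
  shows "ee A (io A x v) = io A x (ee A v)"
proof -
  have K: "csub (HH A)" using HA_csub[OF A] .
  define w where "w = v - ee A v"
  have worth: "ip w k = 0" if "k \<in> HH A" for k unfolding w_def using proj_orth[OF K that] .
  have xiA: "JJ (x Om) \<in> HH A" using J_HA[OF A bop_in[OF vN_bop[OF x] Om_HA[OF A]]] .
  have "ee A (io A x w) = 0"
  proof (rule proj_zero[OF K])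
    fix k assume k: "k \<in> HH A"
    show "ip (io A x w) k = 0"
    proof (rule dense_eq_scalar[of "G ` A" "ip (io A x w)" "\<lambda>_. 0"])
      show "(\<lambda>n. ip (io A x w) (X n)) \<longlonglongrightarrow> ip (io A x w) y" if "\<And>n. X n \<in> G ` A" "hconv H X y" for X y
        using ipc2'[OF that(2)] .
      show "k \<in> hcl H (G ` A)" using k unfolding HA_def .
      fix d assume "d \<in> G ` A"
      then obtain a where a: "a \<in> A" "d = G a" by blast
      show "ip (io A x w) d = 0"
        using io_adj_G[OF A E x a(1), of w] worth[OF R_HA[OF A a(1) xiA]] a(2) by simp
    qed simp
  qed
  have vw: "v = ee A v + w" unfolding w_def by simp
  have "io A x v = io A x (ee A v) + io A x w"
    using bop_add[OF io_bop[OF A E x], of "ee A v" w] vw by simp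
  then have "ee A (io A x v) = ee A (io A x (ee A v)) + ee A (io A x w)" using proj_add[OF K] by simp
  also have "io A x (ee A v) = x (ee A v)" using io_HA[OF A E x proj_in[OF K]] .
  also have "ee A (x (ee A v)) = x (ee A v)" using proj_id[OF K bop_in[OF vN_bop[OF x] proj_in[OF K]]] .
  finally show ?thesis using \<open>ee A (io A x w) = 0\<close> io_HA[OF A E x proj_in[OF K]] by simp
qed

subsection \<open>The conditional expectation\<close>

definition myE :: "'a set \<Rightarrow> ('h \<Rightarrow> 'h) \<Rightarrow> ('h \<Rightarrow> 'h)" where
  "myE A y = (if y \<in> MM then (\<lambda>v. if v \<in> HH A then ee A (y v) else 0) else (\<lambda>_. 0))"

lemma myE_in: "y \<in> MM \<Longrightarrow> v \<in> HH A \<Longrightarrow> myE A y v = ee A (y v)" unfolding myE_def by simp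
lemma myE_out: "v \<notin> HH A \<Longrightarrow> myE A y v = 0" unfolding myE_def by simp

lemma myE_bop:
  assumes A: "subalg P A" and y: "y \<in> MM"
  shows "bop H (HH A) (myE A y)"
  unfolding bop_def
proof (intro conjI ballI allI impI)
  have K: "csub (HH A)" using HA_csub[OF A] .
  have S: "subsp (HH A)" using HA_subsp[OF A] .
  have yb: "bop H UNIV y" using MM_bop[OF y] .
  show "myE A y x \<in> HH A" if "x \<in> HH A" for x using that proj_in[OF K] myE_in[OF y] by simp
  show "myE A y x = 0" if "x \<notin> HH A" for x using that myE_out by simp
  show "myE A y (x + z) = myE A y x + myE A y z" if "x \<in> HH A" "z \<in> HH A" for x z
    using that myE_in[OF y] subsp_add[OF S that] bop_add[OF yb] proj_add[OF K] by simp
  show "myE A y (sc c x) = sc c (myE A y x)" if "x \<in> HH A" for c x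
    using that myE_in[OF y] subsp_sc[OF S that] bop_sc[OF yb] proj_sc[OF K] by simp
  obtain C where C: "C > 0" "\<And>x. x \<in> UNIV \<Longrightarrow> nm (y x) \<le> C * nm x" using bop_bound[OF yb] by blast
  show "\<exists>C. \<forall>x\<in>HH A. nm (myE A y x) \<le> C * nm x"
  proof (intro exI ballI)
    fix x assume x: "x \<in> HH A"
    have "nm (myE A y x) = nm (ee A (y x))" using myE_in[OF y x] by simp
    also have "\<dots> \<le> nm (y x)" by (rule proj_nm[OF K])
    also have "\<dots> \<le> C * nm x" using C(2) by simp
    finally show "nm (myE A y x) \<le> C * nm x" .
  qed
qed

lemma myE_vN:
  assumes A: "subalg P A" and E: "retraction P A E" and y: "y \<in> MM"
  shows "myE A y \<in> vN H G A"
proof (rule commutation[OF A])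
  show "myE A y \<in> RC A" unfolding RC_def
  proof (intro CollectI conjI ballI)
    show "bop H (HH A) (myE A y)" using myE_bop[OF A y] .
    fix a v assume a: "a \<in> A" and v: "v \<in> HH A"
    have "myE A y (R a v) = ee A (y (R a v))" using myE_in[OF y R_HA[OF A a v]] .
    also have "\<dots> = ee A (R a (y v))" using MM_R[OF y] by simp
    also have "\<dots> = R a (ee A (y v))" using e_R[OF A E a] .
    also have "\<dots> = R a (myE A y v)" using myE_in[OF y v] by simp
    finally show "myE A y (R a v) = R a (myE A y v)" .
  qed
qed

lemma myE_io:
  assumes A: "subalg P A" and E: "retraction P A E" and x: "x \<in> vN H G A"
  shows "myE A (io A x) = x"
proof
  fix v
  have K: "csub (HH A)" using HA_csub[OF A] .
  show "myE A (io A x) v = x v"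
  proof (cases "v \<in> HH A")
    case True
    then show ?thesis using myE_in[OF io_MM[OF A E x] True] io_HA[OF A E x True]
        proj_id[OF K bop_in[OF vN_bop[OF x] True]] by simp
  next
    case False
    then show ?thesis using myE_out bop_out[OF vN_bop[OF x]] by simp
  qed
qed

lemma MM_plus: "y1 \<in> MM \<Longrightarrow> y2 \<in> MM \<Longrightarrow> (\<lambda>v. y1 v + y2 v) \<in> MM" using vN_plus[OF sa_UNIV] .
lemma MM_scal: "y \<in> MM \<Longrightarrow> (\<lambda>v. sc c (y v)) \<in> MM" using vN_scal[OF sa_UNIV] .
lemma MM_comp: "y1 \<in> MM \<Longrightarrow> y2 \<in> MM \<Longrightarrow> y1 \<circ> y2 \<in> MM" using vN_comp[OF sa_UNIV] .
lemma L_MM: "L a \<in> MM" using lam_vN[OF sa_UNIV] by simp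

lemma myE_plus:
  assumes A: "subalg P A" and y1: "y1 \<in> MM" and y2: "y2 \<in> MM"
  shows "myE A (\<lambda>v. y1 v + y2 v) = (\<lambda>v. myE A y1 v + myE A y2 v)"
proof
  fix v
  have K: "csub (HH A)" using HA_csub[OF A] .
  show "myE A (\<lambda>v. y1 v + y2 v) v = myE A y1 v + myE A y2 v"
    by (cases "v \<in> HH A") (simp_all add: myE_in[OF MM_plus[OF y1 y2]] myE_in[OF y1] myE_in[OF y2] myE_out proj_add[OF K])
qed

lemma myE_scal:
  assumes A: "subalg P A" and y: "y \<in> MM"
  shows "myE A (\<lambda>v. sc c (y v)) = (\<lambda>v. sc c (myE A y v))"
proof
  fix v
  have K: "csub (HH A)" using HA_csub[OF A] .
  show "myE A (\<lambda>v. sc c (y v)) v = sc c (myE A y v)"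
    by (cases "v \<in> HH A") (simp_all add: myE_in[OF MM_scal[OF y]] myE_in[OF y] myE_out proj_sc[OF K])
qed

lemma myE_bimod:
  assumes A: "subalg P A" and E: "retraction P A E" and x: "x \<in> vN H G A" and z: "z \<in> vN H G A"
    and y: "y \<in> MM"
  shows "myE A (io A x \<circ> y \<circ> io A z) = x \<circ> myE A y \<circ> z"
proof
  fix v
  have K: "csub (HH A)" using HA_csub[OF A] .
  have S: "subsp (HH A)" using HA_subsp[OF A] .
  have mem: "io A x \<circ> y \<circ> io A z \<in> MM" using MM_comp[OF MM_comp[OF io_MM[OF A E x] y] io_MM[OF A E z]] .
  show "myE A (io A x \<circ> y \<circ> io A z) v = (x \<circ> myE A y \<circ> z) v"
  proof (cases "v \<in> HH A")
    case True
    have zv: "z v \<in> HH A" using bop_in[OF vN_bop[OF z] True] .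
    have "myE A (io A x \<circ> y \<circ> io A z) v = ee A (io A x (y (io A z v)))" using myE_in[OF mem True] by simp
    also have "\<dots> = io A x (ee A (y (z v)))" using io_e[OF A E x] io_HA[OF A E z True] by simp
    also have "\<dots> = x (ee A (y (z v)))" using io_HA[OF A E x proj_in[OF K]] .
    also have "\<dots> = (x \<circ> myE A y \<circ> z) v" using myE_in[OF y zv] by simp
    finally show ?thesis .
  next
    case False
    have z0: "z v = 0" using bop_out[OF vN_bop[OF z] False] .
    have "myE A y 0 = ee A (y 0)" using myE_in[OF y subsp_0[OF S]] .
    also have "y 0 = 0" using bop_zero[OF UNIV_subsp MM_bop[OF y]] .
    also have "ee A 0 = 0" using proj_id[OF K subsp_0[OF S]] .
    finally have "x (myE A y (z v)) = 0" using z0 bop_zero[OF S vN_bop[OF x]] by simp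
    then show ?thesis using myE_out[OF False] by simp
  qed
qed

lemma myE_pos:
  assumes A: "subalg P A" and y: "y \<in> MM"
  shows "Im (ip (myE A (adj H (HH UNIV) y \<circ> y) v) v) = 0 \<and> Re (ip (myE A (adj H (HH UNIV) y \<circ> y) v) v) \<ge> 0"
proof (cases "(adj H (HH UNIV) y \<circ> y) \<in> MM \<and> v \<in> HH A")
  case True
  have K: "csub (HH A)" using HA_csub[OF A] .
  have yb: "bop H UNIV y" using MM_bop[OF y] .
  have e1: "myE A (adj H (HH UNIV) y \<circ> y) v = ee A (adj H UNIV y (y v))"
    using myE_in[of "adj H (HH UNIV) y \<circ> y" v A] True by simp
  have "ip (myE A (adj H (HH UNIV) y \<circ> y) v) v = ip (ee A (adj H UNIV y (y v))) v"
    unfolding e1 ..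
  also have "\<dots> = ip (adj H UNIV y (y v)) (ee A v)" using proj_sym[OF K] .
  also have "ee A v = v" using proj_id[OF K] True by simp
  also have "ip (adj H UNIV y (y v)) v = ip (y v) (y v)" using adj_ip2[OF UNIV_csub yb] by simp
  finally have X: "ip (myE A (adj H (HH UNIV) y \<circ> y) v) v = ip (y v) (y v)" .
  show ?thesis unfolding X using ip_pos[of "y v"] by simp
next
  case False
  then have "myE A (adj H (HH UNIV) y \<circ> y) v = 0" unfolding myE_def by auto
  then show ?thesis by simp
qed

lemma myE_tr:
  assumes A: "subalg P A" and y: "y \<in> MM"
  shows "ip (myE A y Om) Om = ip (y Om) Om"
  using myE_in[OF y Om_HA[OF A]] proj_ip[OF HA_csub[OF A] Om_HA[OF A]] by simp

lemma myE_lam: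
  assumes A: "subalg P A" and E: "retraction P A E"
  shows "myE A (L b) = lam H G A (E b)"
proof (rule op_unique[OF A myE_bop[OF A L_MM] lam_bop[OF A ret_in[OF E]]])
  fix a assume a: "a \<in> A"
  have "myE A (L b) (G a) = ee A (G (b * a))" using myE_in[OF L_MM HA_G[OF a]] by (simp add: L_G)
  also have "\<dots> = G (E b * a)" using e_G[OF A E] ret_right[OF A E a] by simp
  also have "\<dots> = lam H G A (E b) (G a)" using lam_G[OF A ret_in[OF E] a] by simp
  finally show "myE A (L b) (G a) = lam H G A (E b) (G a)" .
qed

definition CP :: "'a set \<Rightarrow> ('a \<Rightarrow> 'a) \<Rightarrow> (('h \<Rightarrow> 'h) \<Rightarrow> ('h \<Rightarrow> 'h)) \<Rightarrow> bool" where
  "CP A EA E \<longleftrightarrow>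
     (\<forall>y. y \<notin> vN H G UNIV \<longrightarrow> E y = (\<lambda>_. 0)) \<and>
     (\<forall>y\<in>vN H G UNIV. E y \<in> vN H G A) \<and>
     (\<forall>x\<in>vN H G A. E (iota P H G A UNIV x) = x) \<and>
     (\<forall>y1\<in>vN H G UNIV. \<forall>y2\<in>vN H G UNIV. E (\<lambda>v. y1 v + y2 v) = (\<lambda>v. E y1 v + E y2 v)) \<and>
     (\<forall>c. \<forall>y\<in>vN H G UNIV. E (\<lambda>v. hsc H c (y v)) = (\<lambda>v. hsc H c (E y v))) \<and>
     (\<forall>x\<in>vN H G A. \<forall>z\<in>vN H G A. \<forall>y\<in>vN H G UNIV.
        E (iota P H G A UNIV x \<circ> y \<circ> iota P H G A UNIV z) = x \<circ> E y \<circ> z) \<and>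
     (\<forall>y\<in>vN H G UNIV. \<forall>v. Im (hip H (E (adj H (HA H G UNIV) y \<circ> y) v) v) = 0 \<and>
                         Re (hip H (E (adj H (HA H G UNIV) y \<circ> y) v) v) \<ge> 0) \<and>
     (\<forall>y\<in>vN H G UNIV. hip H (E y (G 1)) (G 1) = hip H (y (G 1)) (G 1)) \<and>
     (\<forall>b\<in>UNIV. E (lam H G UNIV b) = lam H G A (EA b))"

lemma cexp_is_CP: "cexp P H G A UNIV EA = (THE E. CP A EA E)"
  unfolding cexp_def CP_def by simp

lemma myE_CP:
  assumes A: "subalg P A" and E: "retraction P A E"
  shows "CP A E (myE A)"
  unfolding CP_def
proof (intro conjI ballI allI)
  show "y \<notin> MM \<longrightarrow> myE A y = (\<lambda>_. 0)" for y unfolding myE_def by simp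
  show "myE A y \<in> vN H G A" if "y \<in> MM" for y using myE_vN[OF A E that] .
  show "myE A (io A x) = x" if "x \<in> vN H G A" for x using myE_io[OF A E that] .
  show "myE A (\<lambda>v. y1 v + y2 v) = (\<lambda>v. myE A y1 v + myE A y2 v)" if "y1 \<in> MM" "y2 \<in> MM" for y1 y2
    using myE_plus[OF A that] .
  show "myE A (\<lambda>v. sc c (y v)) = (\<lambda>v. sc c (myE A y v))" if "y \<in> MM" for c y
    using myE_scal[OF A that] .
  show "myE A (io A x \<circ> y \<circ> io A z) = x \<circ> myE A y \<circ> z"
    if "x \<in> vN H G A" "z \<in> vN H G A" "y \<in> MM" for x z y using myE_bimod[OF A E that] .
  show "Im (ip (myE A (adj H (HH UNIV) y \<circ> y) v) v) = 0" if "y \<in> MM" for y v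
    using myE_pos[OF A that] by blast
  show "Re (ip (myE A (adj H (HH UNIV) y \<circ> y) v) v) \<ge> 0" if "y \<in> MM" for y v
    using myE_pos[OF A that] by blast
  show "ip (myE A y Om) Om = ip (y Om) Om" if "y \<in> MM" for y using myE_tr[OF A that] .
  show "myE A (L b) = lam H G A (E b)" for b using myE_lam[OF A E] .
qed

lemma CP_key:
  assumes A: "subalg P A" and E: "retraction P A EA" and C: "CP A EA F" and y: "y \<in> MM"
    and a: "a \<in> A" and c: "c \<in> A"
  shows "ip (F y (G a)) (G c) = ip (y (G a)) (G c)"
proof -
  have Fv: "\<forall>y\<in>MM. F y \<in> vN H G A" using C unfolding CP_def by blast
  have Fb: "\<forall>x\<in>vN H G A. \<forall>z\<in>vN H G A. \<forall>y\<in>MM. F (io A x \<circ> y \<circ> io A z) = x \<circ> F y \<circ> z"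
    using C unfolding CP_def by blast
  have Ft: "\<forall>y\<in>MM. ip (F y Om) Om = ip (y Om) Om" using C unfolding CP_def by blast
  define la where "la = lam H G A a"
  define lc where "lc = lam H G A (st c)"
  have laV: "la \<in> vN H G A" unfolding la_def using lam_vN[OF A a] .
  have lcV: "lc \<in> vN H G A" unfolding lc_def using lam_vN[OF A sa_st[OF A c]] .
  have iola: "io A la = L a" unfolding la_def using io_lam[OF A E a] .
  have iolc: "io A lc = L (st c)" unfolding lc_def using io_lam[OF A E sa_st[OF A c]] .
  have mem: "L (st c) \<circ> y \<circ> L a \<in> MM" using MM_comp[OF MM_comp[OF L_MM y] L_MM] .
  have "F (L (st c) \<circ> y \<circ> L a) = lc \<circ> F y \<circ> la" using Fb laV lcV y iola iolc by metis
  then have "ip ((lc \<circ> F y \<circ> la) Om) Om = ip ((L (st c) \<circ> y \<circ> L a) Om) Om" using Ft mem by metis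
  moreover have "la Om = G a" unfolding la_def using lam_G[OF A a sa_1[OF A]] by simp
  moreover have "F y (G a) \<in> HH A" using bop_in[OF vN_bop[OF bspec[OF Fv y]] HA_G[OF a]] .
  ultimately have "ip (lc (F y (G a))) Om = ip (L (st c) (y (G a))) Om" by (simp add: L_Om)
  moreover have "lc (F y (G a)) = L (st c) (F y (G a))"
    unfolding lc_def using lam_restrict[OF A sa_st[OF A c] \<open>F y (G a) \<in> HH A\<close>] .
  ultimately have "ip (L (st c) (F y (G a))) Om = ip (L (st c) (y (G a))) Om" by simp
  then show ?thesis using L_adj[of "st c"] by (simp add: L_Om)
qed

lemma CP_unique:
  assumes A: "subalg P A" and E: "retraction P A EA" and C1: "CP A EA F1" and C2: "CP A EA F2"
  shows "F1 = F2"
proof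
  fix y
  show "F1 y = F2 y"
  proof (cases "y \<in> MM")
    case False
    then show ?thesis using C1 C2 unfolding CP_def by simp
  next
    case True
    have V1: "F1 y \<in> vN H G A" using C1 True unfolding CP_def by blast
    have V2: "F2 y \<in> vN H G A" using C2 True unfolding CP_def by blast
    show ?thesis
    proof (rule op_unique[OF A vN_bop[OF V1] vN_bop[OF V2]])
      fix a assume a: "a \<in> A"
      show "F1 y (G a) = F2 y (G a)"
      proof (rule ip_dense_eq[OF GA_subsp[OF A]])
        show "F1 y (G a) \<in> hcl H (G ` A)" using bop_in[OF vN_bop[OF V1] HA_G[OF a]] unfolding HA_def .
        show "F2 y (G a) \<in> hcl H (G ` A)" using bop_in[OF vN_bop[OF V2] HA_G[OF a]] unfolding HA_def .
        fix d assume "d \<in> G ` A"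
        then obtain c where c: "c \<in> A" "d = G c" by blast
        show "ip (F1 y (G a)) d = ip (F2 y (G a)) d"
          using CP_key[OF A E C1 True a c(1)] CP_key[OF A E C2 True a c(1)] c(2) by simp
      qed
    qed
  qed
qed

lemma cexp_eq:
  assumes A: "subalg P A" and E: "retraction P A E"
  shows "cexp P H G A UNIV E = myE A"
  unfolding cexp_is_CP
proof (rule the_equality)
  show "CP A E (myE A)" by (rule myE_CP[OF A E])
  fix F assume "CP A E F"
  then show "F = myE A" by (rule CP_unique[OF A E _ myE_CP[OF A E]])
qed

lemma separating:
  assumes T: "T \<in> MM" and S: "S \<in> MM" and e: "T Om = S Om"
  shows "T = S"
proof (rule bop_UNIV_eq[OF MM_bop[OF T] MM_bop[OF S]])
  fix b
  have "T (G b) = T (R b Om)" by (simp add: R_Om)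
  also have "\<dots> = R b (T Om)" using MM_R[OF T] .
  also have "\<dots> = R b (S Om)" using e by simp
  also have "\<dots> = S (R b Om)" using MM_R[OF S] by simp
  finally show "T (G b) = S (G b)" by (simp add: R_Om)
qed

lemma ee_comp:
  assumes A1: "subalg P A1" and E1: "retraction P A1 E1" and A2: "subalg P A2" and E2: "retraction P A2 E2"
    and A3: "subalg P A3" and E3: "retraction P A3 E3" and c: "\<forall>a. E1 (E2 a) = E3 a"
  shows "ee A1 (ee A2 v) = ee A3 v"
proof -
  have "ee A1 \<circ> ee A2 = ee A3"
  proof (rule bop_UNIV_eq)
    show "bop H UNIV (ee A1 \<circ> ee A2)" using bop_comp[OF UNIV_subsp e_bop[OF A1] e_bop[OF A2]] .
    show "bop H UNIV (ee A3)" using e_bop[OF A3] .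
    fix b show "(ee A1 \<circ> ee A2) (G b) = ee A3 (G b)"
      using c by (simp add: e_G[OF A1 E1] e_G[OF A2 E2] e_G[OF A3 E3])
  qed
  then show ?thesis by (metis comp_apply)
qed

lemma square_one:
  assumes A1: "subalg P A1" and E1: "retraction P A1 E1" and A2: "subalg P A2" and E2: "retraction P A2 E2"
    and A3: "subalg P A3" and E3: "retraction P A3 E3" and c: "\<forall>a. E1 (E2 a) = E3 a"
    and x: "x \<in> MM"
  shows "io A1 (myE A1 (io A2 (myE A2 x))) = io A3 (myE A3 x)"
proof (rule separating)
  have z1: "myE A2 x \<in> vN H G A2" using myE_vN[OF A2 E2 x] .
  have y1: "io A2 (myE A2 x) \<in> MM" using io_MM[OF A2 E2 z1] .
  have w1: "myE A1 (io A2 (myE A2 x)) \<in> vN H G A1" using myE_vN[OF A1 E1 y1] .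
  show "io A1 (myE A1 (io A2 (myE A2 x))) \<in> MM" using io_MM[OF A1 E1 w1] .
  have z3: "myE A3 x \<in> vN H G A3" using myE_vN[OF A3 E3 x] .
  show "io A3 (myE A3 x) \<in> MM" using io_MM[OF A3 E3 z3] .
  have "io A1 (myE A1 (io A2 (myE A2 x))) Om = myE A1 (io A2 (myE A2 x)) Om" using io_Om[OF A1 E1 w1] .
  also have "\<dots> = ee A1 (io A2 (myE A2 x) Om)" using myE_in[OF y1 Om_HA[OF A1]] .
  also have "io A2 (myE A2 x) Om = myE A2 x Om" using io_Om[OF A2 E2 z1] .
  also have "myE A2 x Om = ee A2 (x Om)" using myE_in[OF x Om_HA[OF A2]] .
  also have "ee A1 (ee A2 (x Om)) = ee A3 (x Om)" using ee_comp[OF A1 E1 A2 E2 A3 E3 c] .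
  also have "\<dots> = myE A3 x Om" using myE_in[OF x Om_HA[OF A3]] by simp
  also have "\<dots> = io A3 (myE A3 x) Om" using io_Om[OF A3 E3 z3] by simp
  finally show "io A1 (myE A1 (io A2 (myE A2 x))) Om = io A3 (myE A3 x) Om" .
qed

end

theorem theorem4p6:
  fixes P :: "('a::ring_1) pvn" and H :: "('h::ab_group_add) hsp" and \<Gamma> :: "'a \<Rightarrow> 'h"
    and A00 A01 A10 :: "'a set" and E00 E01 E10 :: "'a \<Rightarrow> 'a"
  assumes "fin_pvn P"
    and "subalg P A00" and "subalg P A01" and "subalg P A10"
    and "A00 \<subseteq> A01" and "A00 \<subseteq> A10"
    and "retraction P A00 E00" and "retraction P A01 E01" and "retraction P A10 E10"
    and "\<forall>a. E10 (E01 a) = E00 a" and "\<forall>a. E01 (E10 a) = E00 a"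
    and "hilb H" and "emb P H \<Gamma>" and "hcl H (range \<Gamma>) = UNIV"
  shows "\<forall>x\<in>vN H \<Gamma> UNIV.
     iota P H \<Gamma> A10 UNIV (cexp P H \<Gamma> A10 UNIV E10 (iota P H \<Gamma> A01 UNIV (cexp P H \<Gamma> A01 UNIV E01 x)))
       = iota P H \<Gamma> A00 UNIV (cexp P H \<Gamma> A00 UNIV E00 x) \<and>
     iota P H \<Gamma> A00 UNIV (cexp P H \<Gamma> A00 UNIV E00 x)
       = iota P H \<Gamma> A01 UNIV (cexp P H \<Gamma> A01 UNIV E01 (iota P H \<Gamma> A10 UNIV (cexp P H \<Gamma> A10 UNIV E10 x)))"
proof -
  interpret alg H P \<Gamma>
    by (unfold_locales) (use assms in simp_all)
  have c00: "cexp P H \<Gamma> A00 UNIV E00 = myE A00" using cexp_eq[OF assms(2) assms(7)] .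
  have c01: "cexp P H \<Gamma> A01 UNIV E01 = myE A01" using cexp_eq[OF assms(3) assms(8)] .
  have c10: "cexp P H \<Gamma> A10 UNIV E10 = myE A10" using cexp_eq[OF assms(4) assms(9)] .
  show ?thesis
  proof
    fix x assume x: "x \<in> vN H \<Gamma> UNIV"
    have s1: "io A10 (myE A10 (io A01 (myE A01 x))) = io A00 (myE A00 x)"
      using square_one[OF assms(4) assms(9) assms(3) assms(8) assms(2) assms(7) assms(10) x] .
    have s2: "io A01 (myE A01 (io A10 (myE A10 x))) = io A00 (myE A00 x)"
      using square_one[OF assms(3) assms(8) assms(4) assms(9) assms(2) assms(7) assms(11) x] .
    show "iota P H \<Gamma> A10 UNIV (cexp P H \<Gamma> A10 UNIV E10 (iota P H \<Gamma> A01 UNIV (cexp P H \<Gamma> A01 UNIV E01 x)))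
       = iota P H \<Gamma> A00 UNIV (cexp P H \<Gamma> A00 UNIV E00 x) \<and>
     iota P H \<Gamma> A00 UNIV (cexp P H \<Gamma> A00 UNIV E00 x)
       = iota P H \<Gamma> A01 UNIV (cexp P H \<Gamma> A01 UNIV E01 (iota P H \<Gamma> A10 UNIV (cexp P H \<Gamma> A10 UNIV E10 x)))"
      unfolding c00 c01 c10 using s1 s2 by simp
  qed
qed


end
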